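(* Let $X$ be a Hilbert space with inner product $(\cdot,\cdot)$, let $S\subset\mathbb{C}$ be open with $S=\overline{S}$, and let $\mathcal L(\lambda)$, $\lambda\in S$, be a selfadjoint holomorphic family of type (A) on a dense domain $D\subset X$ such that either $\mathcal L(\lambda)$ has compact resolvent, or $\mathcal L(\lambda)=\mathbb{I}-\mathcal B(\lambda)$ where $\mathcal B$ is a compact selfadjoint pencil with trivial kernel for $\lambda\in S\cap\mathbb{R}$. Let $\{\mu_j(\lambda)\}_{j\ge1}$ be real analytic functions and $\{u_j(\lambda)\}_{j\ge1}$ analytic vector-valued functions on $S\cap\mathbb{R}$ such that $\mathcal L(\lambda)u_j(\lambda)=\mu_j(\lambda)u_j(\lambda)$ and $\{u_j(\lambda)\}_{j\ge1}$ is an orthonormal basis of $X$ for each $\lambda\in S\cap\mathbb{R}$. Let $\lambda_0\in S\cap\mathbb{R}$ be a real characteristic value of $\mathcal L$ of finite geometric multiplicity $k>0$, and for $s\ge1$ let $Y_s$ be the span of those $u_j(\lambda_0)$ for which $\mu_j^{(n)}(\lambda_0)=0$ for all $n=0,1,\dots,s-1$. Then a nonzero vector $u^{[0]}$ begins a chain of root vectors for $\lambda_0$ of length $m$ if and only if $u^{[0]}\in Y_m$; and in that case a chain $\{u^{[0]},u^{[1]},\dots,u^{[m-1]}\}$ of length $m$ has the form \[ u^{[r]}=\sum_{d=0}^r\frac{1}{d!}\,\mathcal U_0^{(d)}\mathcal V_0\, w^{[r-d]},\qquad r=0,1,\dots,m-1, \] where $w^{[s]}\in Y_{m-s}$, $\mathcal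 U_0^{(d)}:=\mathcal U^{(d)}(\lambda_0)$ and $\mathcal V_0:=\mathcal V(\lambda_0)$.
   Context: A holomorphic family of type (A) on $X$, defined for $\lambda\in S$, is a family of closed operators $\mathcal L(\lambda):D\to X$ with domain $D$ independent of $\lambda$ such that $\lambda\mapsto\mathcal L(\lambda)u$ is holomorphic for every $u\in D$. It is selfadjoint if $S=\overline S$ and $\mathcal L(\overline\lambda)=\mathcal L(\lambda)^*$. A characteristic value is a $\lambda_0\in S$ with $\ker\mathcal L(\lambda_0)\neq\{0\}$; its geometric multiplicity is $\dim\ker\mathcal L(\lambda_0)$. With $\mathcal L^{(\ell)}(\lambda_0)u:=\frac{d^\ell}{d\lambda^\ell}(\mathcal L(\lambda)u)|_{\lambda=\lambda_0}$, a chain of root vectors of length $m$ for $\lambda_0$ is a sequence $u^{[0]},\dots,u^{[m-1]}\in D$ with $u^{[0]}\ne0$, $\mathcal L(\lambda_0)u^{[0]}=0$ and $\sum_{\ell=0}^q\frac1{\ell!}\mathcal L^{(\ell)}(\lambda_0)u^{[q-\ell]}=0$ for $q=1,\dots,m-1$. For $\lambda\in S\cap\mathbb{R}$, $\mathcal V(\lambda):X\to\ell_2$ is $\mathcal V(\lambda)w:=\{(w,u_j(\lambda))\}_{j\ge1}$ and $\mathcal U(\lambda):\ell_2\to X$ is $\mathcal U(\lambda)\{a_j\}:=\sum_j a_ju_j(\lambda)$; its derivatives are $\mathcal U^{(n)}(\lambda)\{a_j\}:=\sum_j a_ju_j^{(n)}(\lambda)$, applied to sequences with only finitely many nonzero entries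 (note $\mathcal V_0w$ has at most $k$ nonzero entries when $w\in Y_1=\ker\mathcal L(\lambda_0)$). *)

theory Defs
  imports "HOL-Analysis.Analysis"
begin

class complex_inner = real_normed_vector +
  fixes scaleC :: "complex \<Rightarrow> 'a \<Rightarrow> 'a"  (infixr "*\<^sub>C" 75)
  fixes cinner :: "'a \<Rightarrow> 'a \<Rightarrow> complex"
  assumes scaleC_of_real: "scaleC (complex_of_real r) x = scaleR r x"
    and scaleC_add_right: "scaleC a (x + y) = scaleC a x + scaleC a y"
    and scaleC_add_left: "scaleC (a + b) x = scaleC a x + scaleC b x"
    and scaleC_scaleC: "scaleC a (scaleC b x) = scaleC (a * b) x"
    and scaleC_one: "scaleC 1 x = x"
    and cinner_commute: "cinner x y = cnj (cinner y x)"
    and cinner_add_left: "cinner (x + y) z = cinner x z + cinner y z"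
    and cinner_scaleC_left: "cinner (scaleC a x) y = a * cinner x y"
    and cinner_self_real: "Im (cinner x x) = 0"
    and cinner_self_nonneg: "0 \<le> Re (cinner x x)"
    and cinner_self_eq_0: "cinner x x = 0 \<longleftrightarrow> x = 0"
    and norm_eq_sqrt_cinner: "norm x = sqrt (Re (cinner x x))"

definition csubspace :: "'a::complex_inner set \<Rightarrow> bool" where
  "csubspace A \<longleftrightarrow> 0 \<in> A \<and> (\<forall>x\<in>A. \<forall>y\<in>A. x + y \<in> A) \<and> (\<forall>c. \<forall>x\<in>A. c *\<^sub>C x \<in> A)"

definition clinear_on :: "'a::complex_inner set \<Rightarrow> ('a \<Rightarrow> 'b::complex_inner) \<Rightarrow> bool" where
  "clinear_on A f \<longleftrightarrow> (\<forall>x\<in>A. \<forall>y\<in>A. f (x + y) = f x + f y) \<and> (\<forall>c. \<forall>x\<in>A. f (c *\<^sub>C x) = c *\<^sub>C f x)"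

definition cspan :: "'a::complex_inner set \<Rightarrow> 'a set" where
  "cspan A = {\<Sum>a\<in>F. c a *\<^sub>C a | F c. finite F \<and> F \<subseteq> A}"

definition cindependent :: "'a::complex_inner set \<Rightarrow> bool" where
  "cindependent F \<longleftrightarrow> (\<forall>G c. finite G \<and> G \<subseteq> F \<and> (\<Sum>a\<in>G. c a *\<^sub>C a) = 0 \<longrightarrow> (\<forall>a\<in>G. c a = 0))"

definition has_cdim :: "'a::complex_inner set \<Rightarrow> nat \<Rightarrow> bool" where
  "has_cdim A k \<longleftrightarrow> (\<exists>F. finite F \<and> card F = k \<and> F \<subseteq> A \<and> cindependent F \<and> cspan F = A)"

definition closed_operator :: "'a::complex_inner set \<Rightarrow> ('a \<Rightarrow> 'a) \<Rightarrow> bool" where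
  "closed_operator D T \<longleftrightarrow> closed {(x, T x) | x. x \<in> D}"

text \<open>T' is the Hilbert adjoint of the densely defined operator T with domain D,
  where T' is also defined on D (so T* has domain exactly D and acts as T').\<close>
definition is_adjoint_on :: "'a::complex_inner set \<Rightarrow> ('a \<Rightarrow> 'a) \<Rightarrow> ('a \<Rightarrow> 'a) \<Rightarrow> bool" where
  "is_adjoint_on D T T' \<longleftrightarrow>
     (\<forall>v. v \<in> D \<longleftrightarrow> (\<exists>w. \<forall>x\<in>D. cinner (T x) v = cinner x w)) \<and>
     (\<forall>x\<in>D. \<forall>v\<in>D. cinner (T x) v = cinner x (T' v))"

definition compact_op :: "('a::complex_inner \<Rightarrow> 'a) \<Rightarrow> bool" where
  "compact_op R \<longleftrightarrow> clinear_on UNIV R \<and> (\<forall>B. bounded B \<longrightarrow> compact (closure (R ` B)))"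

definition has_compact_resolvent :: "'a::complex_inner set \<Rightarrow> ('a \<Rightarrow> 'a) \<Rightarrow> bool" where
  "has_compact_resolvent D T \<longleftrightarrow>
     (\<exists>z R. compact_op R \<and> (\<forall>v. R v \<in> D \<and> T (R v) - z *\<^sub>C R v = v) \<and>
            (\<forall>x\<in>D. R (T x - z *\<^sub>C x) = x))"

definition vec_holomorphic_on :: "(complex \<Rightarrow> 'a::complex_inner) \<Rightarrow> complex set \<Rightarrow> bool" where
  "vec_holomorphic_on f S \<longleftrightarrow>
     (\<forall>z\<in>S. \<exists>v. ((\<lambda>w. inverse (w - z) *\<^sub>C (f w - f z)) \<longlongrightarrow> v) (at z))"

definition cderiv :: "(complex \<Rightarrow> 'a::complex_inner) \<Rightarrow> complex \<Rightarrow> 'a" where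
  "cderiv f = (\<lambda>z. Lim (at z) (\<lambda>w. inverse (w - z) *\<^sub>C (f w - f z)))"

definition nderiv :: "nat \<Rightarrow> (real \<Rightarrow> 'a::real_normed_vector) \<Rightarrow> real \<Rightarrow> 'a" where
  "nderiv n f = ((\<lambda>g t. vector_derivative g (at t)) ^^ n) f"

definition real_analytic_on :: "(real \<Rightarrow> 'a::real_normed_vector) \<Rightarrow> real set \<Rightarrow> bool" where
  "real_analytic_on f A \<longleftrightarrow>
     (\<forall>t0\<in>A. \<exists>e>0. \<exists>a. \<forall>t. \<bar>t - t0\<bar> < e \<longrightarrow> (\<lambda>n. (t - t0) ^ n *\<^sub>R a n) sums f t)"

definition holomorphic_family_A :: "complex set \<Rightarrow> 'a::complex_inner set \<Rightarrow> (complex \<Rightarrow> 'a \<Rightarrow> 'a) \<Rightarrow> bool" where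
  "holomorphic_family_A S D L \<longleftrightarrow> open S \<and> csubspace D \<and>
     (\<forall>z\<in>S. clinear_on D (L z) \<and> closed_operator D (L z)) \<and>
     (\<forall>x\<in>D. vec_holomorphic_on (\<lambda>z. L z x) S)"

definition selfadjoint_family :: "complex set \<Rightarrow> 'a::complex_inner set \<Rightarrow> (complex \<Rightarrow> 'a \<Rightarrow> 'a) \<Rightarrow> bool" where
  "selfadjoint_family S D L \<longleftrightarrow> cnj ` S = S \<and> (\<forall>z\<in>S. is_adjoint_on D (L z) (L (cnj z)))"

definition compact_selfadjoint_pencil :: "complex set \<Rightarrow> (complex \<Rightarrow> 'a::complex_inner \<Rightarrow> 'a) \<Rightarrow> bool" where
  "compact_selfadjoint_pencil S B \<longleftrightarrow>
     (\<forall>z\<in>S. compact_op (B z)) \<and> (\<forall>x. vec_holomorphic_on (\<lambda>z. B z x) S) \<and>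
     (\<forall>z\<in>S. \<forall>x y. cinner (B z x) y = cinner x (B (cnj z) y))"

definition root_chain :: "'a::complex_inner set \<Rightarrow> (complex \<Rightarrow> 'a \<Rightarrow> 'a) \<Rightarrow> complex \<Rightarrow> nat \<Rightarrow> (nat \<Rightarrow> 'a) \<Rightarrow> bool" where
  "root_chain D L lam0 m us \<longleftrightarrow>
     (\<forall>i<m. us i \<in> D) \<and> us 0 \<noteq> 0 \<and> L lam0 (us 0) = 0 \<and>
     (\<forall>q. 1 \<le> q \<and> q \<le> m - 1 \<longrightarrow>
        (\<Sum>l=0..q. (1 / fact l) *\<^sub>C (cderiv ^^ l) (\<lambda>z. L z (us (q - l))) lam0) = 0)"

definition Yspace :: "(nat \<Rightarrow> real \<Rightarrow> real) \<Rightarrow> (nat \<Rightarrow> real \<Rightarrow> 'a::complex_inner) \<Rightarrow> real \<Rightarrow> nat \<Rightarrow> 'a set" where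
  "Yspace \<mu> u lam0 s = cspan {u j lam0 | j. \<forall>n<s. nderiv n (\<mu> j) lam0 = 0}"

definition Vop :: "(nat \<Rightarrow> real \<Rightarrow> 'a::complex_inner) \<Rightarrow> real \<Rightarrow> 'a \<Rightarrow> nat \<Rightarrow> complex" where
  "Vop u t w = (\<lambda>j. cinner w (u j t))"

definition Uop :: "nat \<Rightarrow> (nat \<Rightarrow> real \<Rightarrow> 'a::complex_inner) \<Rightarrow> real \<Rightarrow> (nat \<Rightarrow> complex) \<Rightarrow> 'a" where
  "Uop n u t a = (\<Sum>j. a j *\<^sub>C nderiv n (u j) t)"

end

theory Submission
  imports Defs "HOL-Complex_Analysis.Complex_Analysis"
begin

lemma scaleC_zero_left [simp]: "0 *\<^sub>C (x::'a::complex_inner) = 0"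
proof -
  have "0 *\<^sub>C x = (0 + 0) *\<^sub>C x" by simp
  also have "\<dots> = 0 *\<^sub>C x + 0 *\<^sub>C x" by (rule scaleC_add_left)
  finally show ?thesis by simp
qed

lemma scaleC_zero_right [simp]: "a *\<^sub>C (0::'a::complex_inner) = 0"
proof -
  have "a *\<^sub>C (0::'a) = a *\<^sub>C (0 + 0)" by simp
  also have "\<dots> = a *\<^sub>C 0 + a *\<^sub>C 0" by (rule scaleC_add_right)
  finally show ?thesis by simp
qed

lemma scaleC_one' [simp]: "1 *\<^sub>C (x::'a::complex_inner) = x" by (rule scaleC_one)

lemma scaleC_minus_left: "(- a) *\<^sub>C (x::'a::complex_inner) = - (a *\<^sub>C x)"
proof -
  have "(- a) *\<^sub>C x + a *\<^sub>C x = (- a + a) *\<^sub>C x" by (rule scaleC_add_left[symmetric])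
  also have "\<dots> = 0" by simp
  finally show ?thesis by (simp add: add_eq_0_iff2)
qed

lemma scaleC_minus_right: "a *\<^sub>C (- x) = - (a *\<^sub>C (x::'a::complex_inner))"
proof -
  have "a *\<^sub>C (- x) + a *\<^sub>C x = a *\<^sub>C (- x + x)" by (rule scaleC_add_right[symmetric])
  also have "\<dots> = 0" by simp
  finally show ?thesis by (simp add: add_eq_0_iff2)
qed

lemma scaleC_diff_left: "(a - b) *\<^sub>C (x::'a::complex_inner) = a *\<^sub>C x - b *\<^sub>C x"
  using scaleC_add_left[of a "- b" x] by (simp add: scaleC_minus_left)

lemma scaleC_diff_right: "a *\<^sub>C (x - y) = a *\<^sub>C x - a *\<^sub>C (y::'a::complex_inner)"
  using scaleC_add_right[of a x "- y"] by (simp add: scaleC_minus_right)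

lemma scaleC_sum_right: "a *\<^sub>C (\<Sum>i\<in>A. f i) = (\<Sum>i\<in>A. a *\<^sub>C (f i::'a::complex_inner))"
  by (induction A rule: infinite_finite_induct) (auto simp: scaleC_add_right)

lemma scaleC_sum_left: "(\<Sum>i\<in>A. f i) *\<^sub>C (x::'a::complex_inner) = (\<Sum>i\<in>A. f i *\<^sub>C x)"
  by (induction A rule: infinite_finite_induct) (auto simp: scaleC_add_left)

lemma scaleR_as_scaleC: "r *\<^sub>R (x::'a::complex_inner) = complex_of_real r *\<^sub>C x"
  by (simp add: scaleC_of_real)

lemma cinner_zero_left [simp]: "cinner 0 (y::'a::complex_inner) = 0"
  using cinner_add_left[of 0 0 y] by simp

lemma cinner_zero_right [simp]: "cinner x (0::'a::complex_inner) = 0"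
  by (subst cinner_commute) simp

lemma cinner_add_right: "cinner x (y + z) = cinner x y + cinner x (z::'a::complex_inner)"
  by (subst (1 2 3) cinner_commute) (simp add: cinner_add_left)

lemma cinner_scaleC_right: "cinner x (a *\<^sub>C y) = cnj a * cinner x (y::'a::complex_inner)"
  by (subst (1 2) cinner_commute) (simp add: cinner_scaleC_left)

lemma cinner_minus_left: "cinner (- x) (y::'a::complex_inner) = - cinner x y"
proof -
  have "cinner (- x) y + cinner x y = cinner (- x + x) y" by (rule cinner_add_left[symmetric])
  also have "\<dots> = 0" by simp
  finally show ?thesis by (simp add: add_eq_0_iff2)
qed

lemma cinner_minus_right: "cinner x (- y) = - cinner x (y::'a::complex_inner)"
  by (subst (1 2) cinner_commute) (simp add: cinner_minus_left)

lemma cinner_diff_left: "cinner (x - y) z = cinner x z - cinner y (z::'a::complex_inner)"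
  using cinner_add_left[of x "- y" z] by (simp add: cinner_minus_left)

lemma cinner_diff_right: "cinner x (y - z) = cinner x y - cinner x (z::'a::complex_inner)"
  using cinner_add_right[of x y "- z"] by (simp add: cinner_minus_right)

lemma cinner_sum_left: "cinner (\<Sum>i\<in>A. f i) (y::'a::complex_inner) = (\<Sum>i\<in>A. cinner (f i) y)"
  by (induction A rule: infinite_finite_induct) (auto simp: cinner_add_left)

lemma cinner_sum_right: "cinner (x::'a::complex_inner) (\<Sum>i\<in>A. f i) = (\<Sum>i\<in>A. cinner x (f i))"
  by (induction A rule: infinite_finite_induct) (auto simp: cinner_add_right)

lemma cinner_scaleR_left: "cinner (r *\<^sub>R x) (y::'a::complex_inner) = complex_of_real r * cinner x y"
  by (simp add: scaleR_as_scaleC cinner_scaleC_left)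

lemma cinner_scaleR_right: "cinner x (r *\<^sub>R (y::'a::complex_inner)) = complex_of_real r * cinner x y"
  by (simp add: scaleR_as_scaleC cinner_scaleC_right)

lemma cinner_self_norm: "cinner x x = complex_of_real ((norm (x::'a::complex_inner))\<^sup>2)"
proof -
  have "(norm x)\<^sup>2 = Re (cinner x x)"
    using norm_eq_sqrt_cinner[of x] cinner_self_nonneg[of x] by simp
  then show ?thesis using cinner_self_real[of x] by (simp add: complex_eq_iff)
qed

lemma norm_scaleC: "norm (a *\<^sub>C x) = cmod a * norm (x::'a::complex_inner)"
proof -
  have "cinner (a *\<^sub>C x) (a *\<^sub>C x) = (a * cnj a) * cinner x x"
    by (simp add: cinner_scaleC_left cinner_scaleC_right)
  also have "a * cnj a = complex_of_real ((cmod a)\<^sup>2)"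
    by (rule complex_norm_square[symmetric])
  finally have "complex_of_real ((norm (a *\<^sub>C x))\<^sup>2) = complex_of_real (((cmod a) * norm x)\<^sup>2)"
    by (simp add: cinner_self_norm power_mult_distrib)
  then have "(norm (a *\<^sub>C x))\<^sup>2 = ((cmod a) * norm x)\<^sup>2"
    using of_real_eq_iff by blast
  then show ?thesis
    by (simp add: power2_eq_iff_nonneg)
qed

lemma cauchy_schwarz: "cmod (cinner x y) \<le> norm x * norm (y::'a::complex_inner)"
proof (cases "y = 0")
  case True then show ?thesis by simp
next
  case False
  define N where "N = (norm y)\<^sup>2"
  have N: "N > 0" using False by (simp add: N_def)
  define c where "c = cinner x y / complex_of_real N"
  define A where "A = (cmod (cinner x y))\<^sup>2"
  have AA: "cinner x y * cnj (cinner x y) = complex_of_real A"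
    unfolding A_def by (rule complex_norm_square[symmetric])
  have yy: "cinner y y = complex_of_real N" by (simp add: N_def cinner_self_norm)
  have yx: "cinner y x = cnj (cinner x y)" by (rule cinner_commute)
  have "cinner (x - c *\<^sub>C y) (x - c *\<^sub>C y) =
        cinner x x - cnj c * cinner x y - c * cinner y x + c * cnj c * cinner y y"
    by (simp add: cinner_diff_left cinner_diff_right cinner_scaleC_left cinner_scaleC_right
        algebra_simps)
  also have "\<dots> = cinner x x - complex_of_real (A / N)"
  proof -
    have "cnj c * cinner x y = complex_of_real (A / N)"
      unfolding c_def using N AA by (simp add: field_simps mult.commute)
    moreover have "c * cinner y x = complex_of_real (A / N)"
      unfolding c_def yx using N AA by (simp add: field_simps)
    moreover have "c * cnj c * cinner y y = complex_of_real (A / N)"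
      unfolding c_def yy using N AA by (simp add: field_simps power2_eq_square)
    ultimately show ?thesis by simp
  qed
  finally have "cinner (x - c *\<^sub>C y) (x - c *\<^sub>C y) = complex_of_real ((norm x)\<^sup>2 - A / N)"
    by (simp add: cinner_self_norm)
  then have "0 \<le> (norm x)\<^sup>2 - A / N"
    by (metis Re_complex_of_real cinner_self_nonneg)
  then have "A \<le> (norm x)\<^sup>2 * N"
    using N by (simp add: field_simps)
  then have "(cmod (cinner x y))\<^sup>2 \<le> (norm x * norm y)\<^sup>2"
    by (simp add: A_def N_def power_mult_distrib)
  then show ?thesis
    by (meson norm_ge_zero power2_le_imp_le zero_le_mult_iff)
qed

lemma bounded_bilinear_cinner: "bounded_bilinear (cinner :: 'a::complex_inner \<Rightarrow> _)"
proof (rule bounded_bilinear.intro)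
  show "\<exists>K. \<forall>a b::'a. norm (cinner a b) \<le> norm a * norm b * K"
    by (rule exI[of _ 1]) (simp add: cauchy_schwarz)
qed (simp_all add: cinner_add_left cinner_add_right cinner_scaleR_left cinner_scaleR_right
       scaleR_conv_of_real)

lemma bounded_bilinear_scaleC: "bounded_bilinear (scaleC :: complex \<Rightarrow> 'a::complex_inner \<Rightarrow> 'a)"
proof (rule bounded_bilinear.intro)
  show "\<exists>K. \<forall>a (b::'a). norm (a *\<^sub>C b) \<le> norm a * norm b * K"
    by (rule exI[of _ 1]) (simp add: norm_scaleC)
qed (simp_all add: scaleC_add_left scaleC_add_right scaleR_as_scaleC scaleC_scaleC
      scaleR_conv_of_real mult.commute)

lemma SL:
  fixes \<phi> :: "complex \<Rightarrow> complex"
  assumes hol: "\<phi> holomorphic_on ball z0 R" and R: "R > 0"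
    and bnd: "\<And>w. w \<in> ball z0 R \<Longrightarrow> cmod (\<phi> w) \<le> B"
    and w: "w \<in> ball z0 (R/4)" "w \<noteq> z0" and w': "w' \<in> ball z0 (R/4)" "w' \<noteq> z0"
  shows "cmod ((deriv \<phi> w - deriv \<phi> z0) / (w - z0) - (deriv \<phi> w' - deriv \<phi> z0) / (w' - z0))
           \<le> 128 * B / R^3 * cmod (w - w')"
proof -
  define F where "F = deriv \<phi>"
  have holF: "F holomorphic_on ball z0 R" unfolding F_def by (rule holomorphic_deriv[OF hol open_ball])
  have contphi: "continuous_on (ball z0 R) \<phi>" using hol holomorphic_on_imp_continuous_on by blast
  have bound2: "cmod (deriv F z) \<le> 32 * B / R^2" if z: "z \<in> ball z0 (R/2)" for z
  proof -
    have sub: "cball z (R/4) \<subseteq> ball z0 R"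
    proof
      fix x assume "x \<in> cball z (R/4)"
      then have "dist z x \<le> R/4" by simp
      moreover have "dist z0 z < R/2" using z by simp
      ultimately show "x \<in> ball z0 R" using dist_triangle[of z0 x z] R by simp
    qed
    have "norm ((deriv ^^ 2) \<phi> z) \<le> fact 2 * B / (R/4)^2"
    proof (rule Cauchy_inequality)
      show "\<phi> holomorphic_on ball z (R / 4)" using hol sub ball_subset_cball
        by (meson holomorphic_on_subset order_trans)
      show "continuous_on (cball z (R / 4)) \<phi>" using contphi sub continuous_on_subset by blast
      show "0 < R/4" using R by simp
      show "norm (\<phi> x) \<le> B" if "norm (z - x) = R / 4" for x
        using sub that by (intro bnd) (auto simp: dist_norm)
    qed
    moreover have "(deriv ^^ 2) \<phi> = deriv F" by (simp add: F_def numeral_2_eq_2)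
    ultimately show ?thesis by (simp add: power2_eq_square field_simps)
  qed
  define P where "P = (\<lambda>z. if z = z0 then deriv F z0 else (F z - F z0) / (z - z0))"
  have holP: "P holomorphic_on ball z0 R" unfolding P_def by (rule pole_lemma_open[OF holF open_ball])
  have contP: "continuous_on (ball z0 R) P" using holP holomorphic_on_imp_continuous_on by blast
  have boundP: "cmod (P z) \<le> 32 * B / R^2" if z: "z \<in> ball z0 (R/2)" for z
  proof (cases "z = z0")
    case True then show ?thesis using bound2 z by (simp add: P_def)
  next
    case False
    have "norm (F z - F z0) \<le> 32 * B / R^2 * norm (z - z0)"
    proof (rule field_differentiable_bound[of "ball z0 (R/2)"])
      show "(F has_field_derivative deriv F x) (at x within ball z0 (R / 2))" if "x \<in> ball z0 (R / 2)" for x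
        using that R by (intro holomorphic_derivI[OF holF open_ball]) auto
    qed (use bound2 z R in auto)
    then show ?thesis using False by (simp add: P_def norm_divide field_simps)
  qed
  have boundP': "cmod (deriv P z) \<le> 128 * B / R^3" if z: "z \<in> ball z0 (R/4)" for z
  proof -
    have sub: "cball z (R/4) \<subseteq> ball z0 (R/2)"
    proof
      fix x assume "x \<in> cball z (R/4)"
      then have "dist z x \<le> R/4" by simp
      moreover have "dist z0 z < R/4" using z by simp
      ultimately show "x \<in> ball z0 (R/2)" using dist_triangle[of z0 x z] R by simp
    qed
    have "norm ((deriv ^^ 1) P z) \<le> fact 1 * (32 * B / R^2) / (R/4)^1"
    proof (rule Cauchy_inequality)
      have bb: "ball z0 (R/2) \<subseteq> ball z0 R" using R by (intro subset_ball) simp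
      show "P holomorphic_on ball z (R / 4)" using holP sub ball_subset_cball bb
        by (meson holomorphic_on_subset order_trans)
      show "continuous_on (cball z (R / 4)) P" using contP sub bb
        by (meson continuous_on_subset order_trans)
      show "0 < R/4" using R by simp
      show "norm (P x) \<le> 32 * B / R^2" if "norm (z - x) = R / 4" for x
        using sub that by (intro boundP) (auto simp: dist_norm)
    qed
    then show ?thesis by (simp add: field_simps power3_eq_cube power2_eq_square)
  qed
  have "norm (P w - P w') \<le> 128 * B / R^3 * norm (w - w')"
  proof (rule field_differentiable_bound[of "ball z0 (R/4)"])
    show "(P has_field_derivative deriv P x) (at x within ball z0 (R / 4))" if "x \<in> ball z0 (R / 4)" for x
      using that R by (intro holomorphic_derivI[OF holP open_ball]) auto
  qed (use boundP' w w' in auto)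
  then show ?thesis using w w' by (simp add: P_def F_def)
qed

lemma LIP:
  fixes Q :: "complex \<Rightarrow> 'a::complete_space"
  assumes d: "\<delta> > 0"
    and lip: "\<And>w w'. w \<in> ball z0 \<delta> \<Longrightarrow> w \<noteq> z0 \<Longrightarrow> w' \<in> ball z0 \<delta> \<Longrightarrow> w' \<noteq> z0 \<Longrightarrow>
                 dist (Q w) (Q w') \<le> C * cmod (w - w')"
  shows "\<exists>v. (Q \<longlongrightarrow> v) (at z0)"
proof -
  have "cauchy_filter (filtermap Q (at z0))"
  proof (subst cauchy_filter_metric_filtermap, intro allI impI)
    fix e :: real assume e: "e > 0"
    define r where "r = min \<delta> (e / (2 * (\<bar>C\<bar> + 1)))"
    have r: "r > 0" "r \<le> \<delta>" using d e by (auto simp: r_def)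
    have r2: "\<bar>C\<bar> * (2 * r) < e"
    proof -
      have "\<bar>C\<bar> * (2 * r) \<le> \<bar>C\<bar> * (2 * (e / (2 * (\<bar>C\<bar> + 1))))"
        by (intro mult_left_mono) (auto simp: r_def)
      also have "\<dots> = e * (\<bar>C\<bar> / (\<bar>C\<bar> + 1))" by (simp add: field_simps)
      also have "\<dots> < e * 1" using e by (intro mult_strict_left_mono) auto
      finally show ?thesis by simp
    qed
    let ?P = "\<lambda>w. w \<in> ball z0 r \<and> w \<noteq> z0"
    have "eventually ?P (at z0)"
      unfolding eventually_at using r by (auto intro!: exI[of _ r] simp: dist_commute)
    moreover have "dist (Q x) (Q y) < e" if "?P x" "?P y" for x y
    proof -
      have "dist (Q x) (Q y) \<le> C * cmod (x - y)"
        using that r by (intro lip) (auto simp: subset_ball[THEN subsetD])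
      also have "\<dots> \<le> \<bar>C\<bar> * cmod (x - y)" by (intro mult_right_mono) auto
      also have "cmod (x - y) \<le> 2 * r"
      proof -
        have "cmod (x - y) \<le> dist z0 x + dist z0 y"
          by (metis dist_commute dist_norm dist_triangle)
        then show ?thesis using that by simp
      qed
      then have "\<bar>C\<bar> * cmod (x - y) \<le> \<bar>C\<bar> * (2 * r)" by (intro mult_left_mono) auto
      finally show ?thesis using r2 by simp
    qed
    ultimately show "\<exists>P. eventually P (at z0) \<and> (\<forall>x y. P x \<and> P y \<longrightarrow> dist (Q x) (Q y) < e)"
      by blast
  qed
  then have "convergent_filter (filtermap Q (at z0))"
    by (rule cauchy_filter_convergent)
  then obtain v where "filtermap Q (at z0) \<le> nhds v" by (auto simp: convergent_filter_iff)
  then show ?thesis by (auto simp: filterlim_def)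
qed

definition Qt :: "(complex \<Rightarrow> 'a::complex_inner) \<Rightarrow> complex \<Rightarrow> complex \<Rightarrow> 'a" where
  "Qt g z w = inverse (w - z) *\<^sub>C (g w - g z)"

lemma cderiv_tendsto:
  assumes "vec_holomorphic_on g S" "z \<in> S"
  shows "(Qt g z \<longlongrightarrow> cderiv g z) (at z)"
proof -
  obtain v where v: "((\<lambda>w. inverse (w - z) *\<^sub>C (g w - g z)) \<longlongrightarrow> v) (at z)"
    using assms unfolding vec_holomorphic_on_def by blast
  then have "cderiv g z = v" unfolding cderiv_def by (intro tendsto_Lim) auto
  moreover have "Qt g z = (\<lambda>w. inverse (w - z) *\<^sub>C (g w - g z))" by (rule ext) (simp add: Qt_def)
  ultimately show ?thesis using v by simp
qed

lemma vec_hol_cont: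
  assumes "vec_holomorphic_on g S" "z \<in> S"
  shows "isCont g z"
proof -
  have "((\<lambda>w. (w - z) *\<^sub>C Qt g z w) \<longlongrightarrow> (z - z) *\<^sub>C cderiv g z) (at z)"
    by (intro bounded_bilinear.tendsto[OF bounded_bilinear_scaleC] tendsto_intros
        cderiv_tendsto[OF assms])
  then have "((\<lambda>w. (w - z) *\<^sub>C Qt g z w) \<longlongrightarrow> 0) (at z)" by simp
  moreover have ev: "eventually (\<lambda>w. (w - z) *\<^sub>C Qt g z w = g w - g z) (at z)"
    unfolding eventually_at_filter by (auto simp: Qt_def scaleC_scaleC)
  ultimately have "((\<lambda>w. g w - g z) \<longlongrightarrow> 0) (at z)"
    using tendsto_cong[OF ev] by simp
  then show ?thesis unfolding isCont_def by (simp add: LIM_zero_iff)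
qed

lemma weak_deriv:
  assumes "vec_holomorphic_on g S" "z \<in> S"
  shows "((\<lambda>w. cinner (g w) y) has_field_derivative cinner (cderiv g z) y) (at z)"
proof -
  have "((\<lambda>w. cinner (Qt g z w) y) \<longlongrightarrow> cinner (cderiv g z) y) (at z)"
    by (intro bounded_bilinear.tendsto[OF bounded_bilinear_cinner] tendsto_intros
        cderiv_tendsto[OF assms])
  moreover have "cinner (Qt g z w) y = (cinner (g w) y - cinner (g z) y) / (w - z)" for w
    by (simp add: Qt_def cinner_scaleC_left cinner_diff_left divide_inverse mult.commute)
  ultimately show ?thesis unfolding has_field_derivative_iff by simp
qed

lemma weak_hol:
  assumes "vec_holomorphic_on g S" "open S"
  shows "(\<lambda>w. cinner (g w) y) holomorphic_on S"
  using weak_deriv[OF assms(1)] assms(2)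
  by (auto simp: holomorphic_on_def field_differentiable_def at_within_open[of _ S])

lemma vec_hol_deriv:
  fixes g :: "complex \<Rightarrow> 'a::{complex_inner,complete_space}"
  assumes S: "open S" and hol: "vec_holomorphic_on g S"
  shows "vec_holomorphic_on (cderiv g) S"
  unfolding vec_holomorphic_on_def
proof
  fix z0 assume z0: "z0 \<in> S"
  obtain R where R: "R > 0" "cball z0 R \<subseteq> S" using open_contains_cball S z0 by blast
  have "continuous_on (cball z0 R) g"
    using vec_hol_cont[OF hol] R by (intro continuous_at_imp_continuous_on) auto
  then have "compact (g ` cball z0 R)" by (intro compact_continuous_image) auto
  then obtain B0 where B0: "\<And>w. w \<in> cball z0 R \<Longrightarrow> norm (g w) \<le> B0"
    by (meson compact_imp_bounded bounded_iff imageI)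
  define B where "B = max B0 0"
  have B: "B \<ge> 0" "\<And>w. w \<in> cball z0 R \<Longrightarrow> norm (g w) \<le> B" using B0 by (auto simp: B_def le_max_iff_disj)
  define C where "C = 128 * B / R^3"
  have C: "C \<ge> 0" using B R by (simp add: C_def)
  have "\<exists>v. (Qt (cderiv g) z0 \<longlongrightarrow> v) (at z0)"
  proof (rule LIP[of "R/4" _ _ C])
    show "R/4 > 0" using R by simp
    fix w w' assume w: "w \<in> ball z0 (R/4)" "w \<noteq> z0" and w': "w' \<in> ball z0 (R/4)" "w' \<noteq> z0"
    define d where "d = Qt (cderiv g) z0 w - Qt (cderiv g) z0 w'"
    have ballS: "ball z0 R \<subseteq> S" using R ball_subset_cball by blast
    define \<phi> where "\<phi> = (\<lambda>w. cinner (g w) d)"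
    have hol\<phi>: "\<phi> holomorphic_on ball z0 R"
      unfolding \<phi>_def by (rule holomorphic_on_subset[OF weak_hol[OF hol S] ballS])
    have der: "deriv \<phi> x = cinner (cderiv g x) d" if "x \<in> S" for x
      unfolding \<phi>_def by (rule DERIV_imp_deriv[OF weak_deriv[OF hol that]])
    have wS: "w \<in> S" "w' \<in> S" "z0 \<in> S" using w w' R z0 by (auto intro!: ballS[THEN subsetD])
    have "cinner d d = (deriv \<phi> w - deriv \<phi> z0) / (w - z0) - (deriv \<phi> w' - deriv \<phi> z0) / (w' - z0)"
      by (simp add: d_def der wS Qt_def cinner_diff_left cinner_scaleC_left divide_inverse mult.commute)
    then have "cmod (cinner d d) \<le> 128 * (B * norm d) / R^3 * cmod (w - w')"
    proof (simp only:, intro SL[OF hol\<phi> R(1)] w w')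
      fix x assume "x \<in> ball z0 R"
      then have "norm (g x) \<le> B" using B(2) by auto
      then show "cmod (\<phi> x) \<le> B * norm d"
        unfolding \<phi>_def by (metis cauchy_schwarz mult_right_mono norm_ge_zero order_trans)
    qed
    also have "\<dots> = (C * cmod (w - w')) * norm d" by (simp add: C_def)
    moreover have "cmod (cinner d d) = (norm d)^2" unfolding cinner_self_norm norm_of_real by simp
    ultimately have "(norm d)^2 \<le> (C * cmod (w - w')) * norm d"
      by simp
    then have "norm d \<le> C * cmod (w - w')"
      using C by (cases "norm d = 0") (auto simp: power2_eq_square mult_le_cancel_right)
    then show "dist (Qt (cderiv g) z0 w) (Qt (cderiv g) z0 w') \<le> C * cmod (w - w')"
      by (simp add: dist_norm d_def)
  qed
  moreover have "Qt (cderiv g) z0 = (\<lambda>w. inverse (w - z0) *\<^sub>C (cderiv g w - cderiv g z0))"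
    by (rule ext) (simp add: Qt_def)
  ultimately show "\<exists>v. ((\<lambda>w. inverse (w - z0) *\<^sub>C (cderiv g w - cderiv g z0)) \<longlongrightarrow> v) (at z0)"
    by simp
qed

lemma vec_hol_funpow:
  fixes g :: "complex \<Rightarrow> 'a::{complex_inner,complete_space}"
  assumes S: "open S" and hol: "vec_holomorphic_on g S"
  shows "vec_holomorphic_on ((cderiv ^^ n) g) S"
  by (induction n) (auto simp: hol vec_hol_deriv[OF S])

lemma has_vector_derivative_iff_quot:
  "(f has_vector_derivative D) (at x within S) \<longleftrightarrow>
     ((\<lambda>y. inverse (y - x) *\<^sub>R (f y - f x)) \<longlongrightarrow> D) (at x within S)"
proof -
  have "((\<lambda>y. norm (f y - f x - (y - x) *\<^sub>R D) / norm (y - x)) \<longlongrightarrow> 0) (at x within S)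
      = ((\<lambda>y. inverse (y - x) *\<^sub>R (f y - f x) - D) \<longlongrightarrow> 0) (at x within S)"
  proof -
    have "eventually (\<lambda>y. norm (f y - f x - (y - x) *\<^sub>R D) / norm (y - x) =
             norm (inverse (y - x) *\<^sub>R (f y - f x) - D)) (at x within S)"
    proof (rule eventually_at_filter[THEN iffD2], rule always_eventually, intro allI impI)
      fix y assume "y \<noteq> x"
      then have "inverse (y - x) *\<^sub>R ((y - x) *\<^sub>R D) = D" by simp
      then have "inverse (y - x) *\<^sub>R (f y - f x) - D = inverse (y - x) *\<^sub>R (f y - f x - (y - x) *\<^sub>R D)"
        by (simp add: scaleR_diff_right)
      then show "norm (f y - f x - (y - x) *\<^sub>R D) / norm (y - x) = norm (inverse (y - x) *\<^sub>R (f y - f x) - D)"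
        by (simp add: divide_inverse mult.commute abs_inverse)
    qed
    then show ?thesis
      by (simp add: tendsto_cong tendsto_norm_zero_iff)
  qed
  then show ?thesis
    by (simp add: has_vector_derivative_def has_derivative_iff_norm bounded_linear_scaleR_left LIM_zero_iff)
qed

lemma nderiv_0 [simp]: "nderiv 0 f = f" by (simp add: nderiv_def)
lemma nderiv_Suc: "nderiv (Suc n) f t = vector_derivative (nderiv n f) (at t)"
  by (simp add: nderiv_def)

lemma nderiv_cong_open:
  assumes "open A" "\<And>t. t \<in> A \<Longrightarrow> f t = g t" "t \<in> A"
  shows "nderiv n f t = nderiv n g t"
  using assms(3)
proof (induction n arbitrary: t)
  case 0 then show ?case using assms by simp
next
  case (Suc n)
  have "vector_derivative (nderiv n f) (at t within A) = vector_derivative (nderiv n g) (at t within A)"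
  proof (rule vector_derivative_cong_eq)
    show "\<forall>\<^sub>F x in nhds t. x \<in> A \<longrightarrow> nderiv n f x = nderiv n g x"
      using Suc.IH by (intro always_eventually) blast
  qed (use Suc.prems in simp_all)
  moreover have "at t within A = at t" by (rule at_within_open[OF Suc.prems assms(1)])
  ultimately have "vector_derivative (nderiv n f) (at t) = vector_derivative (nderiv n g) (at t)"
    by simp
  then show ?case by (simp only: nderiv_Suc)
qed

definition smooth_on :: "real set \<Rightarrow> (real \<Rightarrow> 'a::real_normed_vector) \<Rightarrow> bool" where
  "smooth_on T f \<longleftrightarrow> (\<forall>n. \<forall>t\<in>T. (nderiv n f has_vector_derivative nderiv (Suc n) f t) (at t))"

lemma smooth_onD: "smooth_on T f \<Longrightarrow> t \<in> T \<Longrightarrow> (nderiv n f has_vector_derivative nderiv (Suc n) f t) (at t)"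
  by (auto simp: smooth_on_def)

lemma smooth_on_subset: "smooth_on T f \<Longrightarrow> T' \<subseteq> T \<Longrightarrow> smooth_on T' f"
  by (auto simp: smooth_on_def)

lemma nderiv_by_family:
  assumes T: "open T" and S0: "\<And>t. t \<in> T \<Longrightarrow> f t = S 0 t"
    and SD: "\<And>q t. t \<in> T \<Longrightarrow> (S q has_vector_derivative S (Suc q) t) (at t)"
  shows "\<And>t. t \<in> T \<Longrightarrow> nderiv q f t = S q t" and "smooth_on T f"
proof -
  show eq: "nderiv q f t = S q t" if "t \<in> T" for q t
    using that
  proof (induction q arbitrary: t)
    case 0 then show ?case using S0 by simp
  next
    case (Suc q)
    have "vector_derivative (nderiv q f) (at t) = vector_derivative (S q) (at t)"
    proof -
      have "vector_derivative (nderiv q f) (at t within T) = vector_derivative (S q) (at t within T)"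
      proof (rule vector_derivative_cong_eq)
        show "\<forall>\<^sub>F x in nhds t. x \<in> T \<longrightarrow> nderiv q f x = S q x"
          using Suc.IH by (intro always_eventually) blast
      qed (use Suc.prems in simp_all)
      moreover have "at t within T = at t" by (rule at_within_open[OF Suc.prems T])
      ultimately show ?thesis by simp
    qed
    also have "\<dots> = S (Suc q) t" using SD[OF Suc.prems] by (rule vector_derivative_at)
    finally show ?case by (simp only: nderiv_Suc)
  qed
  show "smooth_on T f"
    unfolding smooth_on_def
  proof (intro allI ballI)
    fix n t assume t: "t \<in> T"
    have "(S n has_vector_derivative S (Suc n) t) (at t)" using SD[OF t] .
    then have "(nderiv n f has_vector_derivative S (Suc n) t) (at t)"
      by (rule has_vector_derivative_transform_within_open[OF _ T t]) (use eq in auto)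
    then show "(nderiv n f has_vector_derivative nderiv (Suc n) f t) (at t)"
      using eq[OF t] by simp
  qed
qed

lemma smooth_nderiv_eq:
  assumes "open T" "smooth_on T f" "t \<in> T"
  shows "(nderiv n f has_vector_derivative nderiv (Suc n) f t) (at t)"
  using assms smooth_onD by blast

lemma smooth_linear:
  assumes T: "open T" and sm: "smooth_on T A" and f: "bounded_linear f"
  shows "\<And>t. t \<in> T \<Longrightarrow> nderiv n (\<lambda>s. f (A s)) t = f (nderiv n A t)"
    and "smooth_on T (\<lambda>s. f (A s))"
proof -
  have SD: "((\<lambda>s. f (nderiv q A s)) has_vector_derivative f (nderiv (Suc q) A t)) (at t)" if "t \<in> T" for q t
    using bounded_linear.has_vector_derivative[OF f smooth_onD[OF sm that]] .
  show "nderiv n (\<lambda>s. f (A s)) t = f (nderiv n A t)" if "t \<in> T" for t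
    by (rule nderiv_by_family(1)[of T _ "\<lambda>q s. f (nderiv q A s)", OF T _ SD that]) simp_all
  show "smooth_on T (\<lambda>s. f (A s))"
    by (rule nderiv_by_family(2)[of T _ "\<lambda>q s. f (nderiv q A s)", OF T _ SD]) simp_all
qed

lemma pascal_sum:
  fixes p :: "nat \<Rightarrow> nat \<Rightarrow> 'b::real_vector"
  shows "(\<Sum>l\<le>q. real (q choose l) *\<^sub>R (p (Suc l) (q - l) + p l (Suc (q - l)))) =
         (\<Sum>l\<le>Suc q. real (Suc q choose l) *\<^sub>R p l (Suc q - l))"
proof -
  have A: "(\<Sum>l\<le>q. real (q choose l) *\<^sub>R p l (Suc (q - l))) =
           (\<Sum>l\<le>Suc q. real (q choose l) *\<^sub>R p l (Suc q - l))"
    by (simp add: Suc_diff_le)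
  also have "\<dots> = p 0 (Suc q) + (\<Sum>l\<le>q. real (q choose Suc l) *\<^sub>R p (Suc l) (q - l))"
    by (subst sum.atMost_Suc_shift) simp
  finally have A': "(\<Sum>l\<le>q. real (q choose l) *\<^sub>R p l (Suc (q - l))) =
      p 0 (Suc q) + (\<Sum>l\<le>q. real (q choose Suc l) *\<^sub>R p (Suc l) (q - l))" .
  have "(\<Sum>l\<le>Suc q. real (Suc q choose l) *\<^sub>R p l (Suc q - l)) =
        p 0 (Suc q) + (\<Sum>l\<le>q. real (Suc q choose Suc l) *\<^sub>R p (Suc l) (q - l))"
    by (subst sum.atMost_Suc_shift) simp
  also have "\<dots> = p 0 (Suc q) + (\<Sum>l\<le>q. real (q choose l) *\<^sub>R p (Suc l) (q - l)) +
                   (\<Sum>l\<le>q. real (q choose Suc l) *\<^sub>R p (Suc l) (q - l))"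
    by (simp add: sum.distrib scaleR_add_left)
  finally show ?thesis using A' by (simp add: scaleR_add_right sum.distrib algebra_simps)
qed

lemma leibniz:
  assumes bb: "bounded_bilinear pr" and T: "open T" and smA: "smooth_on T A" and smB: "smooth_on T B"
  shows "\<And>t. t \<in> T \<Longrightarrow> nderiv q (\<lambda>s. pr (A s) (B s)) t =
            (\<Sum>l\<le>q. real (q choose l) *\<^sub>R pr (nderiv l A t) (nderiv (q - l) B t))"
    and "smooth_on T (\<lambda>s. pr (A s) (B s))"
proof -
  define S where "S = (\<lambda>q t. \<Sum>l\<le>q. real (q choose l) *\<^sub>R pr (nderiv l A t) (nderiv (q - l) B t))"
  have SD: "(S q has_vector_derivative S (Suc q) t) (at t)" if t: "t \<in> T" for q t
  proof -
    have "(S q has_vector_derivative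
           (\<Sum>l\<le>q. real (q choose l) *\<^sub>R (pr (nderiv (Suc l) A t) (nderiv (q - l) B t) +
                                          pr (nderiv l A t) (nderiv (Suc (q - l)) B t)))) (at t)"
      unfolding S_def
    proof (intro has_vector_derivative_sum bounded_linear.has_vector_derivative[OF bounded_linear_scaleR_right])
      fix l
      show "((\<lambda>s. pr (nderiv l A s) (nderiv (q - l) B s)) has_vector_derivative
            pr (nderiv (Suc l) A t) (nderiv (q - l) B t) + pr (nderiv l A t) (nderiv (Suc (q - l)) B t)) (at t)"
        using bounded_bilinear.has_vector_derivative[OF bb smooth_onD[OF smA t] smooth_onD[OF smB t]]
        by (simp add: add.commute)
    qed
    also have "(\<Sum>l\<le>q. real (q choose l) *\<^sub>R (pr (nderiv (Suc l) A t) (nderiv (q - l) B t) +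
                                          pr (nderiv l A t) (nderiv (Suc (q - l)) B t))) = S (Suc q) t"
      unfolding S_def by (rule pascal_sum[where p = "\<lambda>i j. pr (nderiv i A t) (nderiv j B t)"])
    finally show ?thesis .
  qed
  have "nderiv q (\<lambda>s. pr (A s) (B s)) t = S q t" if "t \<in> T" for t
    by (rule nderiv_by_family(1)[of T _ S, OF T _ SD that]) (simp add: S_def)
  then show "nderiv q (\<lambda>s. pr (A s) (B s)) t =
            (\<Sum>l\<le>q. real (q choose l) *\<^sub>R pr (nderiv l A t) (nderiv (q - l) B t))" if "t \<in> T" for t
    using that by (simp add: S_def)
  show "smooth_on T (\<lambda>s. pr (A s) (B s))"
    by (rule nderiv_by_family(2)[of T _ S, OF T _ SD]) (simp add: S_def)
qed

lemma vec_hol_real: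
  fixes g :: "complex \<Rightarrow> 'a::{complex_inner,complete_space}"
  assumes S: "open S" and hol: "vec_holomorphic_on g S"
  shows "\<And>t. complex_of_real t \<in> S \<Longrightarrow> nderiv n (\<lambda>s. g (complex_of_real s)) t = (cderiv ^^ n) g (complex_of_real t)"
    and "smooth_on {t. complex_of_real t \<in> S} (\<lambda>s. g (complex_of_real s))"
proof -
  define T where "T = {t. complex_of_real t \<in> S}"
  have "open (complex_of_real -` S)" by (rule open_vimage[OF S]) (intro continuous_intros)
  then have T: "open T" by (simp add: vimage_def T_def)
  have SD: "((\<lambda>s. (cderiv ^^ q) g (complex_of_real s)) has_vector_derivative
             (cderiv ^^ Suc q) g (complex_of_real t)) (at t)" if t: "t \<in> T" for q t
  proof -
    let ?G = "(cderiv ^^ q) g"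
    have hq: "vec_holomorphic_on ?G S" by (rule vec_hol_funpow[OF S hol])
    have tS: "complex_of_real t \<in> S" using t by (simp add: T_def)
    have lim: "(Qt ?G (complex_of_real t) \<longlongrightarrow> cderiv ?G (complex_of_real t)) (at (complex_of_real t))"
      by (rule cderiv_tendsto[OF hq tS])
    have "((\<lambda>s. Qt ?G (complex_of_real t) (complex_of_real s)) \<longlongrightarrow> cderiv ?G (complex_of_real t)) (at t)"
    proof (rule LIM_compose2[OF _ lim])
      show "(\<lambda>s. complex_of_real s) \<midarrow>t\<rightarrow> complex_of_real t" by (intro tendsto_intros)
      show "\<exists>d>0. \<forall>x. x \<noteq> t \<and> norm (x - t) < d \<longrightarrow> complex_of_real x \<noteq> complex_of_real t"
        by (rule exI[of _ 1]) simp
    qed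
    moreover have "Qt ?G (complex_of_real t) (complex_of_real s) =
        inverse (s - t) *\<^sub>R (?G (complex_of_real s) - ?G (complex_of_real t))" for s
      by (simp add: Qt_def scaleR_as_scaleC flip: of_real_diff of_real_inverse)
    ultimately show ?thesis
      unfolding has_vector_derivative_iff_quot by simp
  qed
  show "nderiv n (\<lambda>s. g (complex_of_real s)) t = (cderiv ^^ n) g (complex_of_real t)"
    if "complex_of_real t \<in> S" for t
  proof -
    have "t \<in> T" using that by (simp add: T_def)
    show ?thesis
      by (rule nderiv_by_family(1)[of T "\<lambda>s. g (complex_of_real s)" "\<lambda>q s. (cderiv ^^ q) g (complex_of_real s)",
           OF T _ SD \<open>t \<in> T\<close>]) simp
  qed
  have "smooth_on T (\<lambda>s. g (complex_of_real s))"
    by (rule nderiv_by_family(2)[of T "\<lambda>s. g (complex_of_real s)" "\<lambda>q s. (cderiv ^^ q) g (complex_of_real s)",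
           OF T _ SD]) simp
  then show "smooth_on {t. complex_of_real t \<in> S} (\<lambda>s. g (complex_of_real s))"
    by (simp add: T_def)
qed

lemma summable_norm_cancel_cs:
  fixes f :: "nat \<Rightarrow> 'a::{real_normed_vector,complete_space}"
  assumes "summable (\<lambda>n. norm (f n))"
  shows "summable f"
proof -
  let ?P = "\<lambda>n. \<Sum>i<n. f i" and ?Q = "\<lambda>n. \<Sum>i<n. norm (f i)"
  have CQ: "Cauchy ?Q" using assms by (simp add: summable_iff_convergent Cauchy_convergent_iff)
  have key: "norm (?P m - ?P n) \<le> \<bar>?Q m - ?Q n\<bar>" for m n
  proof -
    have *: "norm (?P m - ?P n) \<le> \<bar>?Q m - ?Q n\<bar>" if "n \<le> m" for m n
    proof -
      have spl: "sum F {..<m} = sum F {..<n} + sum F {n..<m}" for F :: "nat \<Rightarrow> 'b::comm_monoid_add"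
        using that by (metis atLeast0LessThan le0 sum.atLeastLessThan_concat)
      have "?P m - ?P n = (\<Sum>i\<in>{n..<m}. f i)" using spl[of f] by simp
      moreover have "?Q m - ?Q n = (\<Sum>i\<in>{n..<m}. norm (f i))" using spl[of "\<lambda>i. norm (f i)"] by simp
      ultimately show ?thesis using norm_sum[of f "{n..<m}"] by simp
    qed
    show ?thesis
    proof (cases "n \<le> m")
      case True then show ?thesis by (rule *)
    next
      case False
      then have "norm (?P n - ?P m) \<le> \<bar>?Q n - ?Q m\<bar>" by (intro *) simp
      then show ?thesis by (simp add: norm_minus_commute abs_minus_commute)
    qed
  qed
  have "Cauchy ?P"
    unfolding Cauchy_iff
  proof (intro allI impI)
    fix e :: real assume "e > 0"
    then obtain M where M: "\<forall>m\<ge>M. \<forall>n\<ge>M. norm (?Q m - ?Q n) < e" using CQ unfolding Cauchy_iff by blast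
    show "\<exists>M. \<forall>m\<ge>M. \<forall>n\<ge>M. norm (?P m - ?P n) < e"
    proof (intro exI allI impI)
      fix m n assume "m \<ge> M" "n \<ge> M"
      then have "norm (?Q m - ?Q n) < e" using M by blast
      then show "norm (?P m - ?P n) < e" using key[of m n] by simp
    qed
  qed
  then show ?thesis by (simp add: summable_iff_convergent Cauchy_convergent_iff)
qed

lemma norm_suminf_le_cs:
  fixes f :: "nat \<Rightarrow> 'a::real_normed_vector"
  assumes "summable f" "summable g" "\<And>n. norm (f n) \<le> g n"
  shows "norm (suminf f) \<le> suminf g"
proof -
  have "(\<lambda>n. norm (\<Sum>i<n. f i)) \<longlonglongrightarrow> norm (suminf f)"
    by (intro tendsto_norm summable_LIMSEQ assms)
  moreover have "(\<lambda>n. \<Sum>i<n. g i) \<longlonglongrightarrow> suminf g" by (intro summable_LIMSEQ assms)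
  moreover have "norm (\<Sum>i<n. f i) \<le> (\<Sum>i<n. g i)" for n
    using norm_sum[of f "{..<n}"] sum_mono[of "{..<n}" "\<lambda>i. norm (f i)" g] assms(3) by force
  ultimately show ?thesis by (intro LIMSEQ_le) auto
qed

lemma summable_geom_poly1:
  fixes q :: real assumes "\<bar>q\<bar> < 1"
  shows "summable (\<lambda>n. real (Suc n) * q ^ n)"
proof -
  have "summable (\<lambda>n. diffs (\<lambda>_. 1::real) n * q ^ n)"
    by (rule termdiff_converges[of q 1]) (use assms in \<open>auto intro: summable_geometric\<close>)
  then show ?thesis by (simp add: diffs_def)
qed

lemma summable_geom_poly2:
  fixes q :: real assumes "\<bar>q\<bar> < 1"
  shows "summable (\<lambda>n. real (Suc n) ^ 2 * q ^ n)"
proof -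
  have "summable (\<lambda>n. diffs (diffs (\<lambda>_. 1::real)) n * \<bar>q\<bar> ^ n)"
  proof (rule termdiff_converges[of "\<bar>q\<bar>" 1])
    fix x :: real assume "norm x < 1"
    then show "summable (\<lambda>n. diffs (\<lambda>_. 1) n * x ^ n)"
      by (intro termdiff_converges[of x 1]) (auto intro: summable_geometric)
  qed (use assms in auto)
  then have s: "summable (\<lambda>n. real (Suc n) * real (Suc (Suc n)) * \<bar>q\<bar> ^ n)"
    by (simp add: diffs_def mult.assoc)
  show ?thesis
  proof (rule summable_comparison_test[OF _ s])
    show "\<exists>N. \<forall>n\<ge>N. norm (real (Suc n) ^ 2 * q ^ n) \<le> real (Suc n) * real (Suc (Suc n)) * \<bar>q\<bar> ^ n"
      by (auto simp: abs_mult power2_eq_square power_abs intro!: mult_right_mono)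
  qed
qed

lemma poly_rem_bound:
  fixes x y \<rho> :: real
  assumes \<rho>: "\<rho> > 0" and x: "\<bar>x\<bar> \<le> \<rho>" and y: "\<bar>y\<bar> \<le> \<rho>"
  shows "\<bar>y ^ Suc n - x ^ Suc n - real (Suc n) * x ^ n * (y - x)\<bar> \<le>
           real (Suc n) ^ 2 * \<rho> ^ n * ((y - x)^2 / \<rho>)"
proof (induction n)
  case 0 then show ?case using \<rho> by simp
next
  case (Suc n)
  define d where "d = y ^ Suc n - x ^ Suc n - real (Suc n) * x ^ n * (y - x)"
  define h where "h = (y - x)^2 / \<rho>"
  have h: "h \<ge> 0" using \<rho> by (simp add: h_def)
  have hh: "(y - x)^2 = \<rho> * h" using \<rho> by (simp add: h_def)
  have eq: "y ^ Suc (Suc n) - x ^ Suc (Suc n) - real (Suc (Suc n)) * x ^ Suc n * (y - x) =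
            y * d + real (Suc n) * x ^ n * (y - x)^2"
    by (simp add: d_def algebra_simps power2_eq_square)
  have dB: "\<bar>d\<bar> \<le> real (Suc n) ^ 2 * \<rho> ^ n * h" using Suc.IH by (simp add: d_def h_def)
  have "\<bar>y * d\<bar> \<le> \<rho> * (real (Suc n) ^ 2 * \<rho> ^ n * h)"
    unfolding abs_mult by (rule mult_mono[OF y dB]) (use \<rho> in auto)
  moreover have "\<bar>real (Suc n) * x ^ n * (y - x)^2\<bar> \<le> real (Suc n) * \<rho> ^ n * (\<rho> * h)"
  proof -
    have "\<bar>x ^ n\<bar> \<le> \<rho> ^ n" using x by (simp add: power_abs power_mono)
    then show ?thesis using h \<rho> by (simp add: abs_mult hh mult_left_mono mult_right_mono)
  qed
  ultimately have "\<bar>y * d + real (Suc n) * x ^ n * (y - x)^2\<bar> \<le>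
      \<rho> * (real (Suc n) ^ 2 * \<rho> ^ n * h) + real (Suc n) * \<rho> ^ n * (\<rho> * h)"
    by (meson abs_triangle_ineq add_mono order_trans)
  also have "\<dots> = (real (Suc n) ^ 2 + real (Suc n)) * \<rho> ^ Suc n * h" by (simp add: algebra_simps)
  also have "\<dots> \<le> real (Suc (Suc n)) ^ 2 * \<rho> ^ Suc n * h"
    using h \<rho> by (intro mult_right_mono) (auto simp: power2_eq_square algebra_simps)
  finally show ?case using eq by (simp add: h_def)
qed

lemma psd:
  fixes a :: "nat \<Rightarrow> 'a::{real_normed_vector,complete_space}"
  assumes R: "R > 0" and sm: "\<And>x. \<bar>x\<bar> < R \<Longrightarrow> summable (\<lambda>n. x ^ n *\<^sub>R a n)" and x: "\<bar>x\<bar> < R"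
  shows "summable (\<lambda>n. x ^ n *\<^sub>R (real (Suc n) *\<^sub>R a (Suc n)))"
    and "((\<lambda>y. \<Sum>n. y ^ n *\<^sub>R a n) has_vector_derivative (\<Sum>n. x ^ n *\<^sub>R (real (Suc n) *\<^sub>R a (Suc n)))) (at x)"
proof -
  define \<rho> where "\<rho> = (\<bar>x\<bar> + R) / 2"
  define \<rho>' where "\<rho>' = (\<rho> + R) / 2"
  have \<rho>: "\<bar>x\<bar> < \<rho>" "\<rho> < \<rho>'" "\<rho>' < R" "\<rho> > 0" "\<rho>' > 0" proof -
    have "0 \<le> \<bar>x\<bar>" by simp
    then show "\<bar>x\<bar> < \<rho>" "\<rho> < \<rho>'" "\<rho>' < R" "\<rho> > 0" "\<rho>' > 0"
      using x R unfolding \<rho>_def \<rho>'_def by (simp_all add: field_simps)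
  qed
  have "summable (\<lambda>n. \<rho>' ^ n *\<^sub>R a n)" using sm \<rho> by simp
  then have "(\<lambda>n. \<rho>' ^ n *\<^sub>R a n) \<longlonglongrightarrow> 0" by (rule summable_LIMSEQ_zero)
  then have "Bseq (\<lambda>n. \<rho>' ^ n *\<^sub>R a n)" by (intro convergent_imp_Bseq convergentI)
  then obtain K where K: "K > 0" "\<And>n. norm (\<rho>' ^ n *\<^sub>R a n) \<le> K" by (auto elim!: BseqE)
  have an: "norm (a n) \<le> K / \<rho>' ^ n" for n
    using K(2)[of n] \<rho> by (simp add: field_simps)
  define q where "q = \<rho> / \<rho>'"
  have q: "0 < q" "q < 1" using \<rho> by (auto simp: q_def)
  have sumD: "summable (\<lambda>n. z ^ n *\<^sub>R (real (Suc n) *\<^sub>R a (Suc n)))" if z: "\<bar>z\<bar> \<le> \<rho>" for z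
  proof (rule summable_norm_cancel_cs)
    have "summable (\<lambda>n. (K / \<rho>') * (real (Suc n) * q ^ n))"
      by (intro summable_mult summable_geom_poly1) (use q in auto)
    then show "summable (\<lambda>n. norm (z ^ n *\<^sub>R (real (Suc n) *\<^sub>R a (Suc n))))"
    proof (rule summable_comparison_test[rotated], intro exI allI impI)
      fix n :: nat
      have "norm (z ^ n *\<^sub>R (real (Suc n) *\<^sub>R a (Suc n))) = \<bar>z\<bar> ^ n * real (Suc n) * norm (a (Suc n))"
        by (simp add: power_abs abs_mult)
      also have "\<dots> \<le> \<rho> ^ n * real (Suc n) * (K / \<rho>' ^ Suc n)"
        by (intro mult_mono power_mono an z) (use \<rho> K in auto)
      also have "\<dots> = (K / \<rho>') * (real (Suc n) * q ^ n)"
        using \<rho> by (simp add: q_def power_divide field_simps)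
      finally show "norm (norm (z ^ n *\<^sub>R (real (Suc n) *\<^sub>R a (Suc n)))) \<le> (K / \<rho>') * (real (Suc n) * q ^ n)"
        by simp
    qed
  qed
  then show "summable (\<lambda>n. x ^ n *\<^sub>R (real (Suc n) *\<^sub>R a (Suc n)))" using \<rho> by simp
  define G1 where "G1 = (\<Sum>n. x ^ n *\<^sub>R (real (Suc n) *\<^sub>R a (Suc n)))"
  define g where "g = (\<lambda>y. \<Sum>n. y ^ n *\<^sub>R a n)"
  define C where "C = (K / \<rho>') / \<rho> * (\<Sum>n. real (Suc n) ^ 2 * q ^ n)"
  have sq: "summable (\<lambda>n. real (Suc n) ^ 2 * q ^ n)" by (rule summable_geom_poly2) (use q in auto)
  have est: "norm (g y - g x - (y - x) *\<^sub>R G1) \<le> C * (y - x)^2" if y: "\<bar>y\<bar> \<le> \<rho>" for y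
  proof -
    define c where "c = (\<lambda>n. y ^ Suc n - x ^ Suc n - real (Suc n) * x ^ n * (y - x))"
    have s1: "(\<lambda>n. y ^ n *\<^sub>R a n - x ^ n *\<^sub>R a n) sums (g y - g x)"
      unfolding g_def by (intro sums_diff summable_sums sm) (use y \<rho> in auto)
    have s1': "(\<lambda>n. y ^ Suc n *\<^sub>R a (Suc n) - x ^ Suc n *\<^sub>R a (Suc n)) sums (g y - g x)"
      using s1 sums_Suc_iff[of "\<lambda>n. y ^ n *\<^sub>R a n - x ^ n *\<^sub>R a n"] by simp
    have s2: "(\<lambda>n. (y - x) *\<^sub>R (x ^ n *\<^sub>R (real (Suc n) *\<^sub>R a (Suc n)))) sums ((y - x) *\<^sub>R G1)"
      unfolding G1_def by (intro sums_scaleR_right summable_sums sumD) (use \<rho> in auto)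
    have s3: "(\<lambda>n. c n *\<^sub>R a (Suc n)) sums (g y - g x - (y - x) *\<^sub>R G1)"
    proof -
      have "(\<lambda>n. (y ^ Suc n *\<^sub>R a (Suc n) - x ^ Suc n *\<^sub>R a (Suc n)) -
               (y - x) *\<^sub>R (x ^ n *\<^sub>R (real (Suc n) *\<^sub>R a (Suc n)))) sums (g y - g x - (y - x) *\<^sub>R G1)"
        by (rule sums_diff[OF s1' s2])
      moreover have "(y ^ Suc n *\<^sub>R a (Suc n) - x ^ Suc n *\<^sub>R a (Suc n)) -
               (y - x) *\<^sub>R (x ^ n *\<^sub>R (real (Suc n) *\<^sub>R a (Suc n))) = c n *\<^sub>R a (Suc n)" for n
        by (simp add: c_def algebra_simps)
      ultimately show ?thesis by simp
    qed
    have bnd: "norm (c n *\<^sub>R a (Suc n)) \<le> ((K / \<rho>') / \<rho> * (y - x)^2) * (real (Suc n) ^ 2 * q ^ n)" for n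
    proof -
      have "norm (c n *\<^sub>R a (Suc n)) = \<bar>c n\<bar> * norm (a (Suc n))" by simp
      also have "\<dots> \<le> (real (Suc n) ^ 2 * \<rho> ^ n * ((y - x)^2 / \<rho>)) * (K / \<rho>' ^ Suc n)"
        unfolding c_def by (intro mult_mono poly_rem_bound an) (use \<rho> y in auto)
      also have "\<dots> = ((K / \<rho>') / \<rho> * (y - x)^2) * (real (Suc n) ^ 2 * q ^ n)"
        using \<rho> by (simp add: q_def power_divide field_simps)
      finally show ?thesis .
    qed
    have "norm (g y - g x - (y - x) *\<^sub>R G1) \<le> (\<Sum>n. ((K / \<rho>') / \<rho> * (y - x)^2) * (real (Suc n) ^ 2 * q ^ n))"
      using norm_suminf_le_cs[OF sums_summable[OF s3] summable_mult[OF sq] bnd] sums_unique[OF s3]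
      by simp
    also have "\<dots> = C * (y - x)^2"
      using suminf_mult[OF sq, of "(K / \<rho>') / \<rho> * (y - x)^2"] by (simp add: C_def)
    finally show ?thesis .
  qed
  have "((\<lambda>y. inverse (y - x) *\<^sub>R (g y - g x) - G1) \<longlongrightarrow> 0) (at x)"
  proof (rule Lim_null_comparison)
    show "((\<lambda>y. C * \<bar>y - x\<bar>) \<longlongrightarrow> 0) (at x)"
      by (auto intro!: tendsto_eq_intros)
    show "\<forall>\<^sub>F y in at x. norm (inverse (y - x) *\<^sub>R (g y - g x) - G1) \<le> C * \<bar>y - x\<bar>"
      unfolding eventually_at
    proof (intro exI[of _ "\<rho> - \<bar>x\<bar>"] conjI ballI impI)
      show "\<rho> - \<bar>x\<bar> > 0" using \<rho> by simp
      fix y assume "y \<in> UNIV" and y: "y \<noteq> x \<and> dist y x < \<rho> - \<bar>x\<bar>"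
      then have yr: "\<bar>y\<bar> \<le> \<rho>" by (auto simp: dist_real_def)
      have "inverse (y - x) *\<^sub>R (g y - g x) - G1 = inverse (y - x) *\<^sub>R (g y - g x - (y - x) *\<^sub>R G1)"
        using y by (simp add: scaleR_diff_right)
      then have "norm (inverse (y - x) *\<^sub>R (g y - g x) - G1) = norm (g y - g x - (y - x) *\<^sub>R G1) / \<bar>y - x\<bar>"
        by (simp add: divide_inverse abs_inverse mult.commute)
      also have "\<dots> \<le> C * (y - x)^2 / \<bar>y - x\<bar>"
        by (intro divide_right_mono est yr) simp
      also have "\<dots> = C * \<bar>y - x\<bar>"
      proof -
        have ne: "\<bar>y - x\<bar> \<noteq> 0" using y by simp
        have "(y - x)^2 = \<bar>y - x\<bar> * \<bar>y - x\<bar>" by (simp add: power2_eq_square abs_mult_self_eq)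
        then show ?thesis using ne by (simp only:) (simp add: field_simps)
      qed
      finally show "norm (inverse (y - x) *\<^sub>R (g y - g x) - G1) \<le> C * \<bar>y - x\<bar>" .
    qed
  qed
  then have "((\<lambda>y. inverse (y - x) *\<^sub>R (g y - g x)) \<longlongrightarrow> G1) (at x)"
    by (simp add: LIM_zero_iff)
  then show "((\<lambda>y. \<Sum>n. y ^ n *\<^sub>R a n) has_vector_derivative (\<Sum>n. x ^ n *\<^sub>R (real (Suc n) *\<^sub>R a (Suc n)))) (at x)"
    unfolding has_vector_derivative_iff_quot g_def G1_def by simp
qed

lemma analytic_smooth:
  fixes f :: "real \<Rightarrow> 'a::{real_normed_vector,complete_space}"
  assumes e: "e > 0" and ps: "\<And>t. \<bar>t - t0\<bar> < e \<Longrightarrow> (\<lambda>n. (t - t0) ^ n *\<^sub>R a n) sums f t"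
  shows "smooth_on (ball t0 e) f"
proof -
  define D where "D = (\<lambda>(b::nat \<Rightarrow> 'a) n. real (Suc n) *\<^sub>R b (Suc n))"
  define A where "A = (\<lambda>k. (D ^^ k) a)"
  have AS: "A (Suc k) n = real (Suc n) *\<^sub>R A k (Suc n)" for k n by (simp add: A_def D_def)
  have smk: "summable (\<lambda>n. x ^ n *\<^sub>R A k n)" if "\<bar>x\<bar> < e" for k x
    using that
  proof (induction k arbitrary: x)
    case 0 then show ?case using ps[of "x + t0"] by (auto simp: A_def sums_iff)
  next
    case (Suc k)
    show ?case using psd(1)[OF e Suc.IH Suc.prems] by (simp add: AS)
  qed
  define S where "S = (\<lambda>k t. \<Sum>n. (t - t0) ^ n *\<^sub>R A k n)"
  have ball: "t \<in> ball t0 e \<longleftrightarrow> \<bar>t - t0\<bar> < e" for t by (simp add: dist_real_def abs_minus_commute)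
  show ?thesis
  proof (rule nderiv_by_family(2)[of "ball t0 e" f S])
    show "f t = S 0 t" if "t \<in> ball t0 e" for t
    proof -
      have "\<bar>t - t0\<bar> < e" using that ball by blast
      then show ?thesis using ps[of t] by (simp add: S_def A_def sums_iff)
    qed
    show "(S k has_vector_derivative S (Suc k) t) (at t)" if t: "t \<in> ball t0 e" for k t
    proof -
      have d1: "((\<lambda>s. s - t0) has_vector_derivative 1) (at t)"
        by (auto intro!: derivative_eq_intros simp: has_real_derivative_iff_has_vector_derivative[symmetric])
      have d2: "((\<lambda>y. \<Sum>n. y ^ n *\<^sub>R A k n) has_vector_derivative S (Suc k) t) (at ((\<lambda>s. s - t0) t))"
      proof -
        have "\<bar>t - t0\<bar> < e" using t ball by blast
        then show ?thesis using psd(2)[OF e smk, of "t - t0" k] by (simp add: S_def AS)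
      qed
      have "((\<lambda>y. \<Sum>n. y ^ n *\<^sub>R A k n) \<circ> (\<lambda>s. s - t0) has_vector_derivative 1 *\<^sub>R S (Suc k) t) (at t)"
        by (rule vector_diff_chain_at[OF d1 d2])
      then show ?thesis by (simp add: S_def o_def)
    qed
  qed simp
qed

lemma tri_swap:
  fixes f :: "nat \<Rightarrow> nat \<Rightarrow> 'b::comm_monoid_add"
  shows "(\<Sum>l\<le>q. \<Sum>s\<le>q - l. f l s) = (\<Sum>s\<le>q. \<Sum>l\<le>q - s. f l s)"
proof -
  have "(\<Sum>l\<le>q. \<Sum>s\<le>q - l. f l s) = (\<Sum>l\<le>q. \<Sum>s\<le>q. if l + s \<le> q then f l s else 0)"
  proof (rule sum.cong[OF refl])
    fix l assume "l \<in> {..q}"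
    have "(\<Sum>s\<le>q. if l + s \<le> q then f l s else 0) = (\<Sum>s\<in>{s. s \<le> q \<and> l + s \<le> q}. f l s)"
      by (simp add: sum.If_cases Collect_conj_eq atMost_def Int_commute)
    also have "{s. s \<le> q \<and> l + s \<le> q} = {..q - l}" using \<open>l \<in> {..q}\<close> by auto
    finally show "(\<Sum>s\<le>q - l. f l s) = (\<Sum>s\<le>q. if l + s \<le> q then f l s else 0)" by simp
  qed
  also have "\<dots> = (\<Sum>s\<le>q. \<Sum>l\<le>q. if l + s \<le> q then f l s else 0)" by (rule sum.swap)
  also have "\<dots> = (\<Sum>s\<le>q. \<Sum>l\<le>q - s. f l s)"
  proof (rule sum.cong[OF refl])
    fix s assume "s \<in> {..q}"
    have "(\<Sum>l\<le>q. if l + s \<le> q then f l s else 0) = (\<Sum>l\<in>{l. l \<le> q \<and> l + s \<le> q}. f l s)"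
      by (simp add: sum.If_cases Collect_conj_eq atMost_def Int_commute)
    also have "{l. l \<le> q \<and> l + s \<le> q} = {..q - s}" using \<open>s \<in> {..q}\<close> by auto
    finally show "(\<Sum>l\<le>q. if l + s \<le> q then f l s else 0) = (\<Sum>l\<le>q - s. f l s)" by simp
  qed
  finally show ?thesis .
qed

lemma sum_reflect:
  fixes f :: "nat \<Rightarrow> nat \<Rightarrow> 'b::comm_monoid_add"
  shows "(\<Sum>d\<le>n. f (n - d) d) = (\<Sum>s\<le>n. f s (n - s))"
  by (rule sum.reindex_bij_witness[of _ "\<lambda>s. n - s" "\<lambda>d. n - d"]) auto

lemma sum_last: "(\<And>l. l < n \<Longrightarrow> f l = 0) \<Longrightarrow> (\<Sum>l\<le>(n::nat). f l) = f n"
proof -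
  assume h: "\<And>l. l < n \<Longrightarrow> f l = 0"
  have "{..n} = insert n {..<n}" by auto
  then show ?thesis using h by simp
qed

lemma sum_head: "(\<Sum>l\<le>(q::nat). f l) = f 0 + (\<Sum>l\<in>{1..q}. f l)"
proof -
  have "{..q} = insert 0 {1..q}" by auto
  then show ?thesis by simp
qed

locale chainalg =
  fixes D :: "'a::complex_inner set" and Ld :: "nat \<Rightarrow> 'a \<Rightarrow> 'a"
    and e :: "nat \<Rightarrow> nat \<Rightarrow> 'a" and mm :: "nat \<Rightarrow> nat \<Rightarrow> real" and J1 :: "nat set"
  assumes D: "csubspace D"
    and eD: "\<And>j n. e j n \<in> D"
    and Ld_add: "\<And>l x y. x \<in> D \<Longrightarrow> y \<in> D \<Longrightarrow> Ld l (x + y) = Ld l x + Ld l y"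
    and Ld_scale: "\<And>l c x. x \<in> D \<Longrightarrow> Ld l (c *\<^sub>C x) = c *\<^sub>C Ld l x"
    and idI: "\<And>j q. (\<Sum>l\<le>q. Ld l (e j (q - l))) = (\<Sum>l\<le>q. complex_of_real (mm j l) *\<^sub>C e j (q - l))"
    and orth: "\<And>i j. cinner (e i 0) (e j 0) = (if i = j then 1 else 0)"
    and J1: "\<And>j. j \<in> J1 \<longleftrightarrow> mm j 0 = 0" and finJ1: "finite J1"
    and Kexp: "\<And>x. x \<in> D \<Longrightarrow> Ld 0 x = 0 \<Longrightarrow> x = (\<Sum>j\<in>J1. cinner x (e j 0) *\<^sub>C e j 0)"
    and perp: "\<And>x i. x \<in> D \<Longrightarrow> i \<in> J1 \<Longrightarrow> cinner (Ld 0 x) (e i 0) = 0"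
begin

definition Y :: "nat \<Rightarrow> 'a set" where
  "Y s = cspan {e j 0 | j. \<forall>n<s. mm j n = 0}"

definition E :: "nat \<Rightarrow> 'a \<Rightarrow> 'a" where
  "E d w = (\<Sum>j\<in>J1. cinner w (e j 0) *\<^sub>C e j d)"

definition K :: "'a set" where "K = {x \<in> D. Ld 0 x = 0}"

lemma D0: "0 \<in> D" and Dadd: "x \<in> D \<Longrightarrow> y \<in> D \<Longrightarrow> x + y \<in> D" and Dscale: "x \<in> D \<Longrightarrow> c *\<^sub>C x \<in> D"
  using D unfolding csubspace_def by auto

lemma Dsum: "(\<And>i. i \<in> F \<Longrightarrow> x i \<in> D) \<Longrightarrow> (\<Sum>i\<in>F. x i) \<in> D"
  by (induction F rule: infinite_finite_induct) (auto simp: D0 Dadd)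

lemma Dminus: "x \<in> D \<Longrightarrow> - x \<in> D"
  using Dscale[of x "-1"] by (simp add: scaleC_minus_left)

lemma Ddiff: "x \<in> D \<Longrightarrow> y \<in> D \<Longrightarrow> x - y \<in> D"
  using Dadd[of x "- y"] Dminus[of y] by simp

lemma Ld_zero: "Ld l 0 = 0"
  using Ld_scale[of 0 l 0] D0 by simp

lemma Ld_sum: "(\<And>i. i \<in> F \<Longrightarrow> x i \<in> D) \<Longrightarrow> Ld l (\<Sum>i\<in>F. x i) = (\<Sum>i\<in>F. Ld l (x i))"
proof (induction F rule: infinite_finite_induct)
  case (insert a F) then show ?case by (simp add: Ld_add Dsum)
qed (auto simp: Ld_zero)

lemma Ld_minus: "x \<in> D \<Longrightarrow> Ld l (- x) = - Ld l x"
  using Ld_scale[of x l "-1"] by (simp add: scaleC_minus_left)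

lemma Ld_diff: "x \<in> D \<Longrightarrow> y \<in> D \<Longrightarrow> Ld l (x - y) = Ld l x - Ld l y"
  using Ld_add[of x "- y" l] Dminus[of y] Ld_minus[of y l] by simp

lemma ED: "E d w \<in> D"
  unfolding E_def by (intro Dsum Dscale eD)

lemma Ld_E: "Ld l (E d w) = (\<Sum>j\<in>J1. cinner w (e j 0) *\<^sub>C Ld l (e j d))"
  unfolding E_def by (simp add: Ld_sum Dscale eD Ld_scale)

lemma E_zero [simp]: "E d 0 = 0" by (simp add: E_def)

lemma Ld0_e0: "j \<in> J1 \<Longrightarrow> Ld 0 (e j 0) = 0"
  using idI[of j 0] J1[of j] by simp

lemma e0_inj: "e i 0 = e j 0 \<Longrightarrow> i = j"
  using orth[of i j] orth[of j j] by (metis one_neq_zero)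

lemma cinner_Y: "w \<in> Y s \<Longrightarrow> \<not> (\<forall>n<s. mm j n = 0) \<Longrightarrow> cinner w (e j 0) = 0"
proof -
  assume w: "w \<in> Y s" and j: "\<not> (\<forall>n<s. mm j n = 0)"
  then obtain F c where F: "finite F" "F \<subseteq> {e j 0 | j. \<forall>n<s. mm j n = 0}" and wF: "w = (\<Sum>a\<in>F. c a *\<^sub>C a)"
    unfolding Y_def cspan_def by blast
  have "cinner a (e j 0) = 0" if aF: "a \<in> F" for a
  proof -
    obtain j' where "a = e j' 0" "\<forall>n<s. mm j' n = 0" using F aF by blast
    moreover then have "j' \<noteq> j" using j by auto
    ultimately show ?thesis using orth[of j' j] by simp
  qed
  then show ?thesis unfolding wF by (simp add: cinner_sum_left cinner_scaleC_left)
qed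

lemma K_sub: "x \<in> K \<Longrightarrow> y \<in> K \<Longrightarrow> x + y \<in> K" "x \<in> K \<Longrightarrow> c *\<^sub>C x \<in> K" "0 \<in> K"
  unfolding K_def by (auto simp: Dadd Dscale Ld_add Ld_scale D0 Ld_zero)

lemma Ksum: "(\<And>i. i \<in> F \<Longrightarrow> x i \<in> K) \<Longrightarrow> (\<Sum>i\<in>F. x i) \<in> K"
  by (induction F rule: infinite_finite_induct) (auto intro: K_sub)

lemma Y_K: "s \<ge> 1 \<Longrightarrow> Y s \<subseteq> K"
proof
  fix w assume s: "s \<ge> 1" and "w \<in> Y s"
  then obtain F c where F: "finite F" "F \<subseteq> {e j 0 | j. \<forall>n<s. mm j n = 0}" and wF: "w = (\<Sum>a\<in>F. c a *\<^sub>C a)"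
    unfolding Y_def cspan_def by blast
  have "a \<in> K" if aF: "a \<in> F" for a
  proof -
    obtain j where "a = e j 0" "\<forall>n<s. mm j n = 0" using F aF by blast
    then have "a = e j 0" "j \<in> J1" using s J1 by auto
    then show ?thesis by (simp add: K_def eD Ld0_e0)
  qed
  then show "w \<in> K" unfolding wF by (intro Ksum K_sub)
qed

lemma K_exp: "x \<in> K \<Longrightarrow> x = (\<Sum>j\<in>J1. cinner x (e j 0) *\<^sub>C e j 0)"
  using Kexp by (auto simp: K_def)

lemma E0_K: "x \<in> K \<Longrightarrow> E 0 x = x"
  using K_exp by (simp add: E_def)

lemma K_Y: 
  assumes x: "x \<in> K" and c: "\<And>j. j \<in> J1 \<Longrightarrow> cinner x (e j 0) \<noteq> 0 \<Longrightarrow> \<forall>n<s. mm j n = 0"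
  shows "x \<in> Y s"
proof -
  define J' where "J' = {j \<in> J1. cinner x (e j 0) \<noteq> 0}"
  have fin: "finite J'" using finJ1 by (simp add: J'_def)
  have "x = (\<Sum>j\<in>J1. cinner x (e j 0) *\<^sub>C e j 0)" by (rule K_exp[OF x])
  also have "\<dots> = (\<Sum>j\<in>J'. cinner x (e j 0) *\<^sub>C e j 0)"
    by (rule sum.mono_neutral_right) (auto simp: J'_def finJ1)
  also have "\<dots> = (\<Sum>a\<in>(\<lambda>j. e j 0) ` J'. (\<lambda>a. cinner x a) a *\<^sub>C a)"
    by (subst sum.reindex) (auto simp: inj_on_def e0_inj)
  finally have xx: "x = (\<Sum>a\<in>(\<lambda>j. e j 0) ` J'. cinner x a *\<^sub>C a)" .
  have "(\<lambda>j. e j 0) ` J' \<subseteq> {e j 0 | j. \<forall>n<s. mm j n = 0}"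
    using c by (auto simp: J'_def)
  then show ?thesis unfolding Y_def cspan_def using fin xx by blast
qed

lemma conv:
  "(\<Sum>l\<le>q. Ld l (\<Sum>d\<le>q-l. E d (w (q-l-d)))) =
   (\<Sum>s\<le>q. \<Sum>j\<in>J1. cinner (w s) (e j 0) *\<^sub>C (\<Sum>l\<le>q-s. complex_of_real (mm j l) *\<^sub>C e j (q-s-l)))"
proof -
  define c where "c = (\<lambda>s j. cinner (w s) (e j 0))"
  have "(\<Sum>l\<le>q. Ld l (\<Sum>d\<le>q-l. E d (w (q-l-d)))) =
        (\<Sum>l\<le>q. \<Sum>d\<le>q-l. (\<lambda>s d. \<Sum>j\<in>J1. c s j *\<^sub>C Ld l (e j d)) (q - l - d) d)"
    by (simp add: Ld_sum ED Ld_E c_def)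
  also have "\<dots> = (\<Sum>l\<le>q. \<Sum>s\<le>q-l. \<Sum>j\<in>J1. c s j *\<^sub>C Ld l (e j (q - l - s)))"
    by (rule sum.cong[OF refl], subst sum_reflect) simp
  also have "\<dots> = (\<Sum>s\<le>q. \<Sum>l\<le>q-s. \<Sum>j\<in>J1. c s j *\<^sub>C Ld l (e j (q - l - s)))"
    by (rule tri_swap)
  also have "\<dots> = (\<Sum>s\<le>q. \<Sum>j\<in>J1. c s j *\<^sub>C (\<Sum>l\<le>q-s. Ld l (e j (q - s - l))))"
    by (rule sum.cong[OF refl], subst sum.swap) (simp add: scaleC_sum_right diff_commute add.commute)
  also have "\<dots> = (\<Sum>s\<le>q. \<Sum>j\<in>J1. c s j *\<^sub>C (\<Sum>l\<le>q-s. complex_of_real (mm j l) *\<^sub>C e j (q-s-l)))"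
    by (simp only: idI)
  finally show ?thesis by (simp add: c_def)
qed

definition gchain :: "nat \<Rightarrow> (nat \<Rightarrow> 'a) \<Rightarrow> bool" where
  "gchain m us \<longleftrightarrow> (\<forall>i<m. us i \<in> D) \<and> (\<forall>q<m. (\<Sum>l\<le>q. Ld l (us (q - l))) = 0)"

definition rep :: "(nat \<Rightarrow> 'a) \<Rightarrow> nat \<Rightarrow> 'a" where
  "rep w r = (\<Sum>d\<le>r. E d (w (r - d)))"

lemma repD: "rep w r \<in> D"
  unfolding rep_def by (intro Dsum ED)

lemma Y_mono: "a \<le> b \<Longrightarrow> Y b \<subseteq> Y a"
  unfolding Y_def cspan_def by (force)

lemma Y_zero: "0 \<in> Y s"
  unfolding Y_def cspan_def by (auto intro!: exI[of _ "{}"])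

lemma conv_zero:
  assumes "\<And>s. s \<le> q \<Longrightarrow> w s \<in> Y (Suc (q - s))"
  shows "(\<Sum>l\<le>q. Ld l (rep w (q - l))) = 0"
proof -
  have "(\<Sum>l\<le>q. Ld l (rep w (q - l))) =
   (\<Sum>s\<le>q. \<Sum>j\<in>J1. cinner (w s) (e j 0) *\<^sub>C (\<Sum>l\<le>q-s. complex_of_real (mm j l) *\<^sub>C e j (q-s-l)))"
    unfolding rep_def by (rule conv)
  also have "\<dots> = 0"
  proof (intro sum.neutral ballI)
    fix s j assume s: "s \<in> {..q}" and j: "j \<in> J1"
    show "cinner (w s) (e j 0) *\<^sub>C (\<Sum>l\<le>q-s. complex_of_real (mm j l) *\<^sub>C e j (q-s-l)) = 0"
    proof (cases "cinner (w s) (e j 0) = 0")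
      case False
      then have "\<forall>n<Suc (q - s). mm j n = 0" using cinner_Y[OF assms[of s]] s by auto
      then show ?thesis by simp
    qed simp
  qed
  finally show ?thesis .
qed

lemma gchain_rep:
  assumes "\<And>s. s < m \<Longrightarrow> w s \<in> Y (m - s)"
  shows "gchain m (rep w)"
  unfolding gchain_def
proof (intro conjI allI impI)
  show "rep w i \<in> D" for i by (rule repD)
  fix q assume q: "q < m"
  show "(\<Sum>l\<le>q. Ld l (rep w (q - l))) = 0"
  proof (rule conv_zero)
    fix s assume "s \<le> q"
    moreover have "Suc (q - s) \<le> m - s" using \<open>s \<le> q\<close> q by arith
    ultimately show "w s \<in> Y (Suc (q - s))" using assms[of s] q Y_mono[of "Suc (q - s)" "m - s"] by auto
  qed
qed

lemma term_eval:
  assumes w: "w \<in> Y t"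
  shows "cinner w (e j 0) * (\<Sum>l\<le>t. complex_of_real (mm j l) * cinner (e j (t - l)) (e i 0)) =
         (if j = i then cinner w (e i 0) * complex_of_real (mm i t) else 0)"
proof (cases "cinner w (e j 0) = 0")
  case True then show ?thesis by auto
next
  case False
  then have z: "\<forall>n<t. mm j n = 0" using cinner_Y[OF w] by blast
  have "(\<Sum>l\<le>t. complex_of_real (mm j l) * cinner (e j (t - l)) (e i 0)) =
        complex_of_real (mm j t) * cinner (e j 0) (e i 0)"
    by (subst sum_last) (use z in auto)
  then show ?thesis by (simp add: orth)
qed

lemma uniq:
  fixes a :: "nat \<Rightarrow> complex"
  assumes sum0: "(\<Sum>s<M. a s * complex_of_real (mm i (M - s))) = 0"
    and van: "\<And>s. s < M \<Longrightarrow> a s \<noteq> 0 \<Longrightarrow> \<forall>n<M - s. mm i n = 0"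
  shows "s < M \<Longrightarrow> a s * complex_of_real (mm i (M - s)) = 0"
proof (rule ccontr)
  assume s0: "s < M" and ne: "a s * complex_of_real (mm i (M - s)) \<noteq> 0"
  have other: "a s' * complex_of_real (mm i (M - s')) = 0" if s': "s' < M" "s' \<noteq> s" for s'
  proof (cases "a s' = 0")
    case False
    then have z': "\<forall>n<M - s'. mm i n = 0" using van s' by blast
    have as: "a s \<noteq> 0" using ne by auto
    then have z: "\<forall>n<M - s. mm i n = 0" using van s0 by blast
    show ?thesis
    proof (cases "s' < s")
      case True
      then have "M - s < M - s'" using s0 by arith
      then have "mm i (M - s) = 0" using z' by blast
      then show ?thesis using ne by simp
    next
      case False
      then have "M - s' < M - s" using s' s0 by arith
      then show ?thesis using z by simp
    qed
  qed simp
  have rest: "(\<Sum>s'\<in>{..<M} - {s}. a s' * complex_of_real (mm i (M - s'))) = 0"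
  proof (rule sum.neutral, rule ballI)
    fix s' assume "s' \<in> {..<M} - {s}"
    then show "a s' * complex_of_real (mm i (M - s')) = 0" using other[of s'] by simp
  qed
  have "(\<Sum>s'<M. a s' * complex_of_real (mm i (M - s'))) = a s * complex_of_real (mm i (M - s))"
    using sum.remove[of "{..<M}" s "\<lambda>s'. a s' * complex_of_real (mm i (M - s'))"] s0 rest by simp
  then show False using sum0 ne by simp
qed

lemma gchain_repr:
  "gchain m us \<Longrightarrow> \<exists>w. (\<forall>s<m. w s \<in> Y (m - s)) \<and> (\<forall>r<m. us r = rep w r)"
proof (induction m)
  case 0 show ?case by auto
next
  case (Suc m')
  have g': "gchain m' us" using Suc.prems by (auto simp: gchain_def)
  obtain w where wY: "\<And>s. s < m' \<Longrightarrow> w s \<in> Y (m' - s)" and wr: "\<And>r. r < m' \<Longrightarrow> us r = rep w r"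
    using Suc.IH[OF g'] by blast
  have usD: "\<And>i. i \<le> m' \<Longrightarrow> us i \<in> D" and ch: "(\<Sum>l\<le>m'. Ld l (us (m' - l))) = 0"
    using Suc.prems by (auto simp: gchain_def)
  define w0 where "w0 = w(m' := 0)"
  have w0Y: "w0 s \<in> Y (m' - s)" if "s \<le> m'" for s
    using wY[of s] that by (cases "s = m'") (auto simp: w0_def Y_zero)
  have rep0: "rep w0 r = us r" if r: "r < m'" for r
  proof -
    have "rep w0 r = rep w r" unfolding rep_def
      by (rule sum.cong[OF refl]) (use r in \<open>auto simp: w0_def\<close>)
    then show ?thesis using wr[OF r] by simp
  qed
  define R where "R = (\<Sum>l\<in>{1..m'}. Ld l (us (m' - l)))"
  have split_w0: "(\<Sum>l\<le>m'. Ld l (rep w0 (m' - l))) = Ld 0 (rep w0 m') + R"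
    unfolding R_def by (subst sum_head) (auto intro!: sum.cong simp: rep0)
  have split_us: "Ld 0 (us m') + R = 0"
    using ch unfolding R_def by (subst (asm) sum_head) simp
  have key: "cinner (w s) (e i 0) * complex_of_real (mm i (m' - s)) = 0" if i: "i \<in> J1" and s: "s < m'" for i s
  proof -
    have "cinner (\<Sum>l\<le>m'. Ld l (rep w0 (m' - l))) (e i 0) = cinner (Ld 0 (rep w0 m' - us m')) (e i 0)"
      using split_w0 split_us repD usD[of m'] by (simp add: Ld_diff eq_neg_iff_add_eq_0[symmetric])
    also have "\<dots> = 0" by (rule perp[OF Ddiff[OF repD usD] i]) simp
    finally have c0: "cinner (\<Sum>l\<le>m'. Ld l (rep w0 (m' - l))) (e i 0) = 0" .
    have "cinner (\<Sum>l\<le>m'. Ld l (rep w0 (m' - l))) (e i 0) =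
      (\<Sum>s\<le>m'. \<Sum>j\<in>J1. cinner (w0 s) (e j 0) *
          (\<Sum>l\<le>m'-s. complex_of_real (mm j l) * cinner (e j (m'-s-l)) (e i 0)))"
      unfolding rep_def conv by (simp add: cinner_sum_left cinner_scaleC_left)
    also have "\<dots> = (\<Sum>s\<le>m'. \<Sum>j\<in>J1. (if j = i then cinner (w0 s) (e i 0) * complex_of_real (mm i (m' - s)) else 0))"
      by (intro sum.cong refl term_eval w0Y) auto
    also have "\<dots> = (\<Sum>s\<le>m'. cinner (w0 s) (e i 0) * complex_of_real (mm i (m' - s)))"
      using i finJ1 by (simp add: sum.delta)
    also have "\<dots> = (\<Sum>s<m'. cinner (w s) (e i 0) * complex_of_real (mm i (m' - s)))"
    proof -
      have "{..m'} = insert m' {..<m'}" by auto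
      then show ?thesis by (simp add: w0_def)
    qed
    finally have "(\<Sum>s<m'. cinner (w s) (e i 0) * complex_of_real (mm i (m' - s))) = 0" using c0 by simp
    then show ?thesis
    proof (rule uniq[OF _ _ s])
      fix s' assume s': "s' < m'" "cinner (w s') (e i 0) \<noteq> 0"
      then show "\<forall>n<m' - s'. mm i n = 0" using cinner_Y[OF wY[OF s'(1)]] by blast
    qed
  qed
  have stepi: "w s \<in> Y (Suc m' - s)" if s: "s < m'" for s
  proof (rule K_Y)
    have "1 \<le> m' - s" using s by simp
    then show "w s \<in> K" using Y_K[of "m' - s"] wY[OF s] by auto
    fix j assume j: "j \<in> J1" and c: "cinner (w s) (e j 0) \<noteq> 0"
    have "\<forall>n<m' - s. mm j n = 0" using cinner_Y[OF wY[OF s]] c by blast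
    moreover have "mm j (m' - s) = 0" using key[OF j s] c by simp
    ultimately show "\<forall>n<Suc m' - s. mm j n = 0"
      by (metis Suc_diff_le less_Suc_eq less_imp_le s)
  qed
  define v where "v = us m' - rep w0 m'"
  have vD: "v \<in> D" unfolding v_def by (intro Ddiff usD repD) simp
  have X0: "(\<Sum>l\<le>m'. Ld l (rep w0 (m' - l))) = 0"
  proof (rule conv_zero)
    fix s assume s: "s \<le> m'"
    show "w0 s \<in> Y (Suc (m' - s))"
    proof (cases "s = m'")
      case True then show ?thesis by (simp add: w0_def Y_zero)
    next
      case False
      then have "s < m'" using s by simp
      then show ?thesis using stepi[of s] by (simp add: w0_def Suc_diff_le)
    qed
  qed
  have a1: "Ld 0 (rep w0 m') = - R" using X0 split_w0 by (simp add: eq_neg_iff_add_eq_0)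
  have a2: "Ld 0 (us m') = - R" using split_us by (simp add: eq_neg_iff_add_eq_0)
  have "Ld 0 v = 0"
    using a1 a2 by (simp add: v_def Ld_diff usD repD)
  then have vK: "v \<in> K" using vD by (simp add: K_def)
  define w' where "w' = w(m' := v)"
  show ?case
  proof (intro exI[of _ w'] conjI allI impI)
    fix s assume s: "s < Suc m'"
    show "w' s \<in> Y (Suc m' - s)"
    proof (cases "s = m'")
      case True
      have "v \<in> Y 1" by (rule K_Y[OF vK]) (auto simp: J1)
      then show ?thesis using True by (simp add: w'_def)
    next
      case False then show ?thesis using stepi[of s] s by (simp add: w'_def)
    qed
  next
    fix r assume r: "r < Suc m'"
    show "us r = rep w' r"
    proof (cases "r = m'")
      case False
      then have r': "r < m'" using r by simp
      have "rep w' r = rep w r" unfolding rep_def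
        by (rule sum.cong[OF refl]) (use r' in \<open>auto simp: w'_def\<close>)
      then show ?thesis using wr[OF r'] by simp
    next
      case True
      have "rep w' m' = E 0 v + (\<Sum>d\<in>{1..m'}. E d (w' (m' - d)))"
        unfolding rep_def by (subst sum_head) (simp add: w'_def)
      moreover have "rep w0 m' = (\<Sum>d\<in>{1..m'}. E d (w0 (m' - d)))"
        unfolding rep_def by (subst sum_head) (simp add: w0_def)
      moreover have "(\<Sum>d\<in>{1..m'}. E d (w' (m' - d))) = (\<Sum>d\<in>{1..m'}. E d (w0 (m' - d)))"
        by (rule sum.cong) (auto simp: w'_def w0_def)
      ultimately have "rep w' m' = v + rep w0 m'" using E0_K[OF vK] by simp
      then show ?thesis using True by (simp add: v_def)
    qed
  qed
qed

end

lemma finite_orthonormal_in_span: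
  fixes b :: "nat \<Rightarrow> 'a::complex_inner"
  assumes orth: "\<And>i j. cinner (b i) (b j) = (if i = j then 1 else 0)"
    and F: "finite F" and sub: "\<And>j. j \<in> J \<Longrightarrow> b j \<in> cspan F"
  shows "finite J"
proof -
  interpret vs: vector_space "scaleC :: complex \<Rightarrow> 'a \<Rightarrow> 'a"
    by unfold_locales (simp_all add: scaleC_add_right scaleC_add_left scaleC_scaleC)
  have span_eq: "vs.span A = cspan A" for A
    unfolding vs.span_explicit cspan_def by simp
  have binj: "b i = b j \<Longrightarrow> i = j" for i j
    using orth[of i j] orth[of j j] by (metis one_neq_zero)
  have ind: "vs.independent (b ` J)"
    unfolding vs.independent_explicit_module
  proof (intro allI impI)
    fix t u v assume t: "finite t" "t \<subseteq> b ` J" and s0: "(\<Sum>v\<in>t. u v *\<^sub>C v) = 0" and v: "v \<in> t"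
    obtain i where vi: "v = b i" using t v by blast
    have "0 = cinner (\<Sum>a\<in>t. u a *\<^sub>C a) v" using s0 by simp
    also have "\<dots> = (\<Sum>a\<in>t. u a * cinner a v)" by (simp add: cinner_sum_left cinner_scaleC_left)
    also have "\<dots> = u v * cinner v v + (\<Sum>a\<in>t - {v}. u a * cinner a v)"
      using t v by (simp add: sum.remove)
    also have "(\<Sum>a\<in>t - {v}. u a * cinner a v) = 0"
    proof (rule sum.neutral, rule ballI)
      fix a assume a: "a \<in> t - {v}"
      then obtain j where "a = b j" using t by blast
      moreover have "j \<noteq> i" using a vi \<open>a = b j\<close> by auto
      ultimately show "u a * cinner a v = 0" using orth[of j i] vi by simp
    qed
    also have "cinner v v = 1" using vi orth[of i i] by simp
    finally show "u v = 0" by simp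
  qed
  have "b ` J \<subseteq> vs.span F" using sub by (auto simp: span_eq)
  then have "finite (b ` J)" using vs.independent_span_bound[OF F ind] by blast
  moreover have "inj_on b J" using binj by (auto simp: inj_on_def)
  ultimately show ?thesis using finite_imageD by blast
qed

lemma dense_cinner_eq:
  fixes a b :: "'a::complex_inner"
  assumes dense: "closure D = UNIV" and h: "\<And>v. v \<in> D \<Longrightarrow> cinner a v = cinner b v"
  shows "a = b"
proof -
  have "continuous_on UNIV (cinner (a - b))"
    using bounded_bilinear.bounded_linear_right[OF bounded_bilinear_cinner] by (rule linear_continuous_on)
  then have cl: "closed {v. cinner (a - b) v = 0}"
    by (intro closed_Collect_eq) auto
  have "D \<subseteq> {v. cinner (a - b) v = 0}"
  proof
    fix v assume "v \<in> D"
    then have "cinner a v = cinner b v" by (rule h)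
    then show "v \<in> {v. cinner (a - b) v = 0}" by (simp add: cinner_diff_left)
  qed
  then have "closure D \<subseteq> {v. cinner (a - b) v = 0}" using cl closure_minimal by blast
  then have "cinner (a - b) (a - b) = 0" using dense by blast
  then have "a - b = 0" by (simp only: cinner_self_eq_0)
  then show ?thesis by simp
qed

lemma orth_span_zero:
  fixes d :: "'a::complex_inner"
  assumes h: "\<And>y. y \<in> A \<Longrightarrow> cinner d y = 0" and dense: "closure (cspan A) = UNIV"
  shows "d = 0"
proof -
  have "cinner d y = 0" if y: "y \<in> cspan A" for y
  proof -
    from y obtain F c where F: "F \<subseteq> A" and yF: "y = (\<Sum>a\<in>F. c a *\<^sub>C a)"
      unfolding cspan_def by blast
    have "cinner d (\<Sum>a\<in>F. c a *\<^sub>C a) = (\<Sum>a\<in>F. cnj (c a) * cinner d a)"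
      by (simp add: cinner_sum_right cinner_scaleC_right)
    also have "\<dots> = 0"
    proof (rule sum.neutral, rule ballI)
      fix a assume "a \<in> F"
      then have "cinner d a = 0" using F h by blast
      then show "cnj (c a) * cinner d a = 0" by simp
    qed
    finally show ?thesis using yF by simp
  qed
  then have "\<And>v. v \<in> cspan A \<Longrightarrow> cinner d v = cinner 0 v" by simp
  then show ?thesis by (rule dense_cinner_eq[OF dense])
qed

theorem proposition2:
  fixes S :: "complex set" and D :: "'a::{complex_inner, complete_space} set"
    and L :: "complex \<Rightarrow> 'a \<Rightarrow> 'a"
    and \<mu> :: "nat \<Rightarrow> real \<Rightarrow> real" and u :: "nat \<Rightarrow> real \<Rightarrow> 'a"
    and lam0 :: real and k m :: nat
  assumes S_open: "open S" and S_conj: "cnj ` S = S"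
    and D_dense: "closure D = UNIV"
    and L_hol: "holomorphic_family_A S D L"
    and L_sa: "selfadjoint_family S D L"
    and L_alt: "(\<forall>z\<in>S. has_compact_resolvent D (L z)) \<or>
       (\<exists>B. compact_selfadjoint_pencil S B \<and> D = UNIV \<and> (\<forall>z\<in>S. \<forall>x. L z x = x - B z x) \<and>
            (\<forall>t. complex_of_real t \<in> S \<longrightarrow> (\<forall>x. B (complex_of_real t) x = 0 \<longrightarrow> x = 0)))"
    and mu_an: "\<forall>j. real_analytic_on (\<mu> j) {t. complex_of_real t \<in> S}"
    and u_an: "\<forall>j. real_analytic_on (u j) {t. complex_of_real t \<in> S}"
    and eig: "\<forall>t. complex_of_real t \<in> S \<longrightarrow>
       (\<forall>j. u j t \<in> D \<and> L (complex_of_real t) (u j t) = complex_of_real (\<mu> j t) *\<^sub>C u j t)"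
    and onb: "\<forall>t. complex_of_real t \<in> S \<longrightarrow>
       (\<forall>i j. cinner (u i t) (u j t) = (if i = j then 1 else 0)) \<and>
       closure (cspan (range (\<lambda>j. u j t))) = UNIV"
    and lam0: "complex_of_real lam0 \<in> S"
    and mult: "has_cdim {x \<in> D. L (complex_of_real lam0) x = 0} k" and k_pos: "k > 0"
    and m_pos: "m \<ge> 1"
  shows "(\<forall>u0. u0 \<noteq> 0 \<longrightarrow>
            ((\<exists>us. root_chain D L (complex_of_real lam0) m us \<and> us 0 = u0) \<longleftrightarrow> u0 \<in> Yspace \<mu> u lam0 m)) \<and>
         (\<forall>us. root_chain D L (complex_of_real lam0) m us \<longrightarrow>
            (\<exists>w. (\<forall>s<m. w s \<in> Yspace \<mu> u lam0 (m - s)) \<and>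
                 (\<forall>r<m. us r = (\<Sum>d=0..r. (1 / fact d) *\<^sub>C Uop d u lam0 (Vop u lam0 (w (r - d)))))))"
proof -
  define T where "T = {t. complex_of_real t \<in> S}"
  have "open (complex_of_real -` S)" by (rule open_vimage[OF S_open]) (intro continuous_intros)
  then have Topen: "open T" by (simp add: vimage_def T_def)
  have l0T: "lam0 \<in> T" using lam0 by (simp add: T_def)
  have Dsub: "csubspace D" and hol: "\<And>x. x \<in> D \<Longrightarrow> vec_holomorphic_on (\<lambda>z. L z x) S"
    using L_hol by (auto simp: holomorphic_family_A_def)
  have adj: "is_adjoint_on D (L (complex_of_real t)) (L (complex_of_real t))" if "t \<in> T" for t
  proof -
    have "\<forall>z\<in>S. is_adjoint_on D (L z) (L (cnj z))" using L_sa unfolding selfadjoint_family_def by (rule conjunct2)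
    moreover have "complex_of_real t \<in> S" using that by (simp add: T_def)
    ultimately have "is_adjoint_on D (L (complex_of_real t)) (L (cnj (complex_of_real t)))" by blast
    then show ?thesis by simp
  qed
  have sa: "cinner (L (complex_of_real t) x) v = cinner x (L (complex_of_real t) v)"
    if "t \<in> T" "x \<in> D" "v \<in> D" for t x v
  proof -
    have "\<forall>x\<in>D. \<forall>v\<in>D. cinner (L (complex_of_real t) x) v = cinner x (L (complex_of_real t) v)"
      using adj[OF that(1)] unfolding is_adjoint_on_def by (rule conjunct2)
    then show ?thesis using that(2,3) by blast
  qed
  have domchar: "v \<in> D \<longleftrightarrow> (\<exists>w. \<forall>x\<in>D. cinner (L (complex_of_real lam0) x) v = cinner x w)" for v
  proof -
    have "\<forall>v. v \<in> D \<longleftrightarrow> (\<exists>w. \<forall>x\<in>D. cinner (L (complex_of_real lam0) x) v = cinner x w)"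
      using adj[OF l0T] unfolding is_adjoint_on_def by (rule conjunct1)
    then show ?thesis by (rule spec)
  qed
  define LD where "LD l x = (cderiv ^^ l) (\<lambda>z. L z x) (complex_of_real lam0)" for l x
  define Ld where "Ld l x = (1 / fact l) *\<^sub>C LD l x" for l x
  define U where "U n j = nderiv n (u j) lam0" for n j
  define M where "M n j = nderiv n (\<mu> j) lam0" for n j
  define e where "e j n = (1 / fact n) *\<^sub>C U n j" for j n
  define mm where "mm j n = M n j / fact n" for j n
  define J1 where "J1 = {j. \<mu> j lam0 = 0}"
  have LD0: "LD 0 x = L (complex_of_real lam0) x" for x by (simp add: LD_def)
  have smL: "smooth_on T (\<lambda>t. L (complex_of_real t) x)" if "x \<in> D" for x
    using vec_hol_real(2)[OF S_open hol[OF that]] by (simp add: T_def)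
  have ndL: "nderiv l (\<lambda>t. L (complex_of_real t) x) lam0 = LD l x" if "x \<in> D" for x l
    using vec_hol_real(1)[OF S_open hol[OF that] lam0] by (simp add: LD_def)
  have blL: "bounded_linear (\<lambda>y. cinner y v)" for v :: 'a
    by (rule bounded_bilinear.bounded_linear_left[OF bounded_bilinear_cinner])
  have blR: "bounded_linear (\<lambda>y. cinner v y)" for v :: 'a
    by (rule bounded_bilinear.bounded_linear_right[OF bounded_bilinear_cinner])
  have F1: "cinner (LD l x) v = cinner x (LD l v)" if x: "x \<in> D" and v: "v \<in> D" for l x v
  proof -
    have "nderiv l (\<lambda>t. cinner (L (complex_of_real t) x) v) lam0 = nderiv l (\<lambda>t. cinner x (L (complex_of_real t) v)) lam0"
      by (rule nderiv_cong_open[OF Topen _ l0T]) (simp add: sa x v)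
    moreover have "nderiv l (\<lambda>t. cinner (L (complex_of_real t) x) v) lam0 = cinner (LD l x) v"
      using smooth_linear(1)[OF Topen smL[OF x] blL l0T] ndL[OF x] by simp
    moreover have "nderiv l (\<lambda>t. cinner x (L (complex_of_real t) v)) lam0 = cinner x (LD l v)"
      using smooth_linear(1)[OF Topen smL[OF v] blR l0T] ndL[OF v] by simp
    ultimately show ?thesis by simp
  qed
  have an: "\<exists>e>0. \<exists>a. \<forall>t. \<bar>t - lam0\<bar> < e \<longrightarrow> (\<lambda>n. (t - lam0) ^ n *\<^sub>R a n) sums f t"
    if "real_analytic_on f {t. complex_of_real t \<in> S}" for f :: "real \<Rightarrow> 'b::real_normed_vector"
    using that lam0 unfolding real_analytic_on_def by blast
  have W2: "(\<Sum>l\<le>q. real (q choose l) *\<^sub>R cinner (U (q - l) j) (LD l v)) =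
            (\<Sum>l\<le>q. real (q choose l) *\<^sub>R (M l j *\<^sub>R cinner (U (q - l) j) v))" if v: "v \<in> D" for q j v
  proof -
    obtain eu au where eu: "eu > 0" and au: "\<And>t. \<bar>t - lam0\<bar> < eu \<Longrightarrow> (\<lambda>n. (t - lam0) ^ n *\<^sub>R au n) sums u j t"
      using an[of "u j"] u_an by blast
    obtain em am where em: "em > 0" and am: "\<And>t. \<bar>t - lam0\<bar> < em \<Longrightarrow> (\<lambda>n. (t - lam0) ^ n *\<^sub>R am n) sums \<mu> j t"
      using an[of "\<mu> j"] mu_an by blast
    define T0 where "T0 = T \<inter> ball lam0 eu \<inter> ball lam0 em"
    have T0open: "open T0" using Topen by (simp add: T0_def open_Int)
    have l0T0: "lam0 \<in> T0" using l0T eu em by (simp add: T0_def)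
    have T0T: "T0 \<subseteq> T" by (auto simp: T0_def)
    have smu: "smooth_on T0 (u j)"
      by (rule smooth_on_subset[OF analytic_smooth[OF eu au]]) (auto simp: T0_def)
    have smm: "smooth_on T0 (\<mu> j)"
      by (rule smooth_on_subset[OF analytic_smooth[OF em am]]) (auto simp: T0_def)
    have smLv: "smooth_on T0 (\<lambda>t. L (complex_of_real t) v)"
      by (rule smooth_on_subset[OF smL[OF v] T0T])
    have smc: "smooth_on T0 (\<lambda>t. cinner (u j t) v)"
      by (rule smooth_linear(2)[OF T0open smu blL])
    have eq: "cinner (u j t) (L (complex_of_real t) v) = \<mu> j t *\<^sub>R cinner (u j t) v" if t: "t \<in> T0" for t
    proof -
      have tT: "t \<in> T" using t T0T by blast
      then have ujD: "u j t \<in> D" and Lu: "L (complex_of_real t) (u j t) = complex_of_real (\<mu> j t) *\<^sub>C u j t"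
        using eig by (auto simp: T_def)
      have "cinner (u j t) (L (complex_of_real t) v) = cinner (L (complex_of_real t) (u j t)) v"
        using sa[OF tT ujD v] by simp
      also have "\<dots> = complex_of_real (\<mu> j t) * cinner (u j t) v" by (simp add: Lu cinner_scaleC_left)
      finally show ?thesis by (simp add: scaleR_conv_of_real)
    qed
    have "nderiv q (\<lambda>t. cinner (u j t) (L (complex_of_real t) v)) lam0 =
          nderiv q (\<lambda>t. \<mu> j t *\<^sub>R cinner (u j t) v) lam0"
      by (rule nderiv_cong_open[OF T0open eq l0T0])
    moreover have "nderiv q (\<lambda>t. cinner (u j t) (L (complex_of_real t) v)) lam0 =
          (\<Sum>l\<le>q. real (q choose l) *\<^sub>R cinner (U (q - l) j) (LD l v))"
      using leibniz(1)[OF bounded_bilinear.flip[OF bounded_bilinear_cinner] T0open smLv smu l0T0, of q]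
      by (simp add: ndL[OF v] U_def)
    moreover have "nderiv q (\<lambda>t. \<mu> j t *\<^sub>R cinner (u j t) v) lam0 =
          (\<Sum>l\<le>q. real (q choose l) *\<^sub>R (M l j *\<^sub>R cinner (U (q - l) j) v))"
      using leibniz(1)[OF bounded_bilinear_scaleR T0open smm smc l0T0, of q]
        smooth_linear(1)[OF T0open smu blL l0T0]
      by (simp add: M_def U_def)
    ultimately show ?thesis by simp
  qed
  have cinner_sumR: "cinner (\<Sum>l\<in>A. r l *\<^sub>R a l) x = (\<Sum>l\<in>A. r l *\<^sub>R cinner (a l) x)"
    for A :: "nat set" and r :: "nat \<Rightarrow> real" and a :: "nat \<Rightarrow> 'a" and x
    by (simp add: cinner_sum_left cinner_scaleR_left scaleR_conv_of_real)
  have UD: "U n j \<in> D" for n j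
  proof (induction n rule: less_induct)
    case (less q)
    define Wv where "Wv = (\<Sum>l\<le>q. real (q choose l) *\<^sub>R (M l j *\<^sub>R U (q - l) j)) -
                          (\<Sum>l\<in>{1..q}. real (q choose l) *\<^sub>R LD l (U (q - l) j))"
    have "\<forall>x\<in>D. cinner (L (complex_of_real lam0) x) (U q j) = cinner x Wv"
    proof
      fix x assume x: "x \<in> D"
      have "(\<Sum>l\<le>q. real (q choose l) *\<^sub>R cinner (U (q - l) j) (LD l x)) =
            cinner (U q j) (L (complex_of_real lam0) x) +
            (\<Sum>l\<in>{1..q}. real (q choose l) *\<^sub>R cinner (LD l (U (q - l) j)) x)"
      proof (subst sum_head)
        have "(\<Sum>l\<in>{1..q}. real (q choose l) *\<^sub>R cinner (U (q - l) j) (LD l x)) =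
              (\<Sum>l\<in>{1..q}. real (q choose l) *\<^sub>R cinner (LD l (U (q - l) j)) x)"
        proof (rule sum.cong[OF refl])
          fix l assume "l \<in> {1..q}"
          then have "q - l < q" by auto
          then show "real (q choose l) *\<^sub>R cinner (U (q - l) j) (LD l x) =
                     real (q choose l) *\<^sub>R cinner (LD l (U (q - l) j)) x"
            using F1[OF less.IH x] by simp
        qed
        then show "real (q choose 0) *\<^sub>R cinner (U (q - 0) j) (LD 0 x) +
            (\<Sum>l\<in>{1..q}. real (q choose l) *\<^sub>R cinner (U (q - l) j) (LD l x)) =
            cinner (U q j) (L (complex_of_real lam0) x) +
            (\<Sum>l\<in>{1..q}. real (q choose l) *\<^sub>R cinner (LD l (U (q - l) j)) x)"
          by (simp add: LD0)
      qed
      moreover have "(\<Sum>l\<le>q. real (q choose l) *\<^sub>R (M l j *\<^sub>R cinner (U (q - l) j) x)) =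
                     cinner (\<Sum>l\<le>q. real (q choose l) *\<^sub>R (M l j *\<^sub>R U (q - l) j)) x"
        by (simp add: cinner_sumR cinner_scaleR_left scaleR_conv_of_real mult.assoc)
      moreover have "(\<Sum>l\<in>{1..q}. real (q choose l) *\<^sub>R cinner (LD l (U (q - l) j)) x) =
                     cinner (\<Sum>l\<in>{1..q}. real (q choose l) *\<^sub>R LD l (U (q - l) j)) x"
        by (simp add: cinner_sumR)
      ultimately have "cinner (U q j) (L (complex_of_real lam0) x) = cinner Wv x"
        using W2[OF x, of q j] by (simp add: Wv_def cinner_diff_left eq_diff_eq)
      then show "cinner (L (complex_of_real lam0) x) (U q j) = cinner x Wv"
        by (metis cinner_commute)
    qed
    then show ?case using domchar by blast
  qed
  have D0: "0 \<in> D" and Dadd: "\<And>x y. x \<in> D \<Longrightarrow> y \<in> D \<Longrightarrow> x + y \<in> D"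
    and Dscale: "\<And>c x. x \<in> D \<Longrightarrow> c *\<^sub>C x \<in> D"
    using Dsub unfolding csubspace_def by auto
  have LDadd: "LD l (x + y) = LD l x + LD l y" if "x \<in> D" "y \<in> D" for l x y
  proof (rule dense_cinner_eq[OF D_dense])
    fix v assume v: "v \<in> D"
    show "cinner (LD l (x + y)) v = cinner (LD l x + LD l y) v"
      using F1[OF Dadd[OF that] v] F1[OF that(1) v] F1[OF that(2) v]
      by (simp add: cinner_add_left)
  qed
  have LDscale: "LD l (c *\<^sub>C x) = c *\<^sub>C LD l x" if "x \<in> D" for l c x
  proof (rule dense_cinner_eq[OF D_dense])
    fix v assume v: "v \<in> D"
    show "cinner (LD l (c *\<^sub>C x)) v = cinner (c *\<^sub>C LD l x) v"
      using F1[OF Dscale[OF that] v] F1[OF that v]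
      by (simp add: cinner_scaleC_left)
  qed
  have eD: "e j n \<in> D" for j n unfolding e_def by (intro Dscale UD)
  have fact_ne: "(fact n :: complex) \<noteq> 0" for n by simp
  have idI: "(\<Sum>l\<le>q. Ld l (e j (q - l))) = (\<Sum>l\<le>q. complex_of_real (mm j l) *\<^sub>C e j (q - l))" for j q
  proof (rule dense_cinner_eq[OF D_dense])
    fix v assume v: "v \<in> D"
    have t1: "cinner (Ld l (e j (q - l))) v =
        complex_of_real (1 / fact q) * (real (q choose l) *\<^sub>R cinner (U (q - l) j) (LD l v))"
      if l: "l \<le> q" for l
    proof -
      have bf: "(of_nat (q choose l) :: complex) = fact q / (fact l * fact (q - l))" by (rule binomial_fact[OF l])
      have "cinner (Ld l (e j (q - l))) v = (1 / fact l) * (1 / fact (q - l)) * cinner (LD l (U (q - l) j)) v"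
        by (simp add: Ld_def e_def LDscale UD cinner_scaleC_left)
      also have "\<dots> = (1 / fact l) * (1 / fact (q - l)) * cinner (U (q - l) j) (LD l v)"
        by (simp add: F1[OF UD v])
      also have "\<dots> = complex_of_real (1 / fact q) * (real (q choose l) *\<^sub>R cinner (U (q - l) j) (LD l v))"
        by (simp add: scaleR_conv_of_real bf field_simps)
      finally show ?thesis .
    qed
    have t2: "cinner (complex_of_real (mm j l) *\<^sub>C e j (q - l)) v =
        complex_of_real (1 / fact q) * (real (q choose l) *\<^sub>R (M l j *\<^sub>R cinner (U (q - l) j) v))"
      if l: "l \<le> q" for l
    proof -
      have bf: "(of_nat (q choose l) :: complex) = fact q / (fact l * fact (q - l))" by (rule binomial_fact[OF l])
      have "cinner (complex_of_real (mm j l) *\<^sub>C e j (q - l)) v =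
            complex_of_real (M l j) / fact l * (1 / fact (q - l)) * cinner (U (q - l) j) v"
        by (simp add: mm_def e_def cinner_scaleC_left)
      also have "\<dots> = complex_of_real (1 / fact q) * (real (q choose l) *\<^sub>R (M l j *\<^sub>R cinner (U (q - l) j) v))"
        by (simp add: scaleR_conv_of_real bf field_simps)
      finally show ?thesis .
    qed
    have "cinner (\<Sum>l\<le>q. Ld l (e j (q - l))) v =
          complex_of_real (1 / fact q) * (\<Sum>l\<le>q. real (q choose l) *\<^sub>R cinner (U (q - l) j) (LD l v))"
      by (simp add: cinner_sum_left t1 sum_distrib_left)
    also have "\<dots> = complex_of_real (1 / fact q) * (\<Sum>l\<le>q. real (q choose l) *\<^sub>R (M l j *\<^sub>R cinner (U (q - l) j) v))"
      by (simp only: W2[OF v])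
    also have "\<dots> = cinner (\<Sum>l\<le>q. complex_of_real (mm j l) *\<^sub>C e j (q - l)) v"
      by (simp add: cinner_sum_left t2 sum_distrib_left)
    finally show "cinner (\<Sum>l\<le>q. Ld l (e j (q - l))) v = cinner (\<Sum>l\<le>q. complex_of_real (mm j l) *\<^sub>C e j (q - l)) v" .
  qed
  have e0: "e j 0 = u j lam0" for j by (simp add: e_def U_def)
  have onb0: "\<And>i j. cinner (u i lam0) (u j lam0) = (if i = j then 1 else 0)"
    and dense0: "closure (cspan (range (\<lambda>j. u j lam0))) = UNIV"
    using onb lam0 by auto
  have eig0: "u j lam0 \<in> D" "L (complex_of_real lam0) (u j lam0) = complex_of_real (\<mu> j lam0) *\<^sub>C u j lam0" for j
    using eig lam0 by auto
  have orth: "cinner (e i 0) (e j 0) = (if i = j then 1 else 0)" for i j by (simp add: e0 onb0)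
  have J1iff: "j \<in> J1 \<longleftrightarrow> mm j 0 = 0" for j by (simp add: J1_def mm_def M_def)
  have Ld0: "Ld 0 x = L (complex_of_real lam0) x" for x by (simp add: Ld_def LD0)
  have finJ1: "finite J1"
  proof -
    obtain F where F: "finite F" "cspan F = {x \<in> D. L (complex_of_real lam0) x = 0}"
      using mult unfolding has_cdim_def by blast
    show ?thesis
    proof (rule finite_orthonormal_in_span[of "\<lambda>j. u j lam0", OF onb0 F(1)])
      fix j assume "j \<in> J1"
      then show "u j lam0 \<in> cspan F" using eig0[of j] F(2) by (simp add: J1_def)
    qed
  qed
  have perp: "cinner (Ld 0 x) (e i 0) = 0" if x: "x \<in> D" and i: "i \<in> J1" for x i
  proof -
    have "cinner (Ld 0 x) (e i 0) = cinner x (L (complex_of_real lam0) (u i lam0))"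
      using sa[OF l0T x eig0(1)[of i]] by (simp add: Ld0 e0)
    also have "\<dots> = 0" using i eig0(2)[of i] by (simp add: J1_def)
    finally show ?thesis .
  qed
  have Kexp: "x = (\<Sum>j\<in>J1. cinner x (e j 0) *\<^sub>C e j 0)" if x: "x \<in> D" and L0x: "Ld 0 x = 0" for x
  proof -
    define d where "d = x - (\<Sum>j\<in>J1. cinner x (e j 0) *\<^sub>C e j 0)"
    have "d = 0"
    proof (rule orth_span_zero[OF _ dense0])
      fix y assume "y \<in> range (\<lambda>j. u j lam0)"
      then obtain i where yi: "y = u i lam0" by blast
      have s: "(\<Sum>j\<in>J1. cinner x (e j 0) * cinner (e j 0) (e i 0)) = (if i \<in> J1 then cinner x (e i 0) else 0)"
        using finJ1 by (simp add: orth if_distrib sum.delta cong: if_cong)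
      have xi: "cinner x (e i 0) = 0" if "i \<notin> J1"
      proof -
        have "0 = cinner (Ld 0 x) (e i 0)" using L0x by simp
        also have "\<dots> = cinner x (L (complex_of_real lam0) (u i lam0))"
          using sa[OF l0T x eig0(1)[of i]] by (simp add: Ld0 e0)
        also have "\<dots> = complex_of_real (\<mu> j lam0) * cinner x (e i 0)" if "j = i" for j
          using that eig0(2)[of i] by (simp add: cinner_scaleC_right e0)
        finally show ?thesis using that by (simp add: J1_def)
      qed
      show "cinner d y = 0"
        using s xi by (auto simp: d_def yi e0[symmetric] cinner_diff_left cinner_sum_left cinner_scaleC_left)
    qed
    then show ?thesis by (simp add: d_def)
  qed
  have Ld_add: "Ld l (x + y) = Ld l x + Ld l y" if "x \<in> D" "y \<in> D" for l x y
    using LDadd[OF that] by (simp add: Ld_def scaleC_add_right)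
  have Ld_scale: "Ld l (c *\<^sub>C x) = c *\<^sub>C Ld l x" if "x \<in> D" for l c x
    using LDscale[OF that] by (simp add: Ld_def scaleC_scaleC mult.commute)
  interpret ca: chainalg D Ld e mm J1
    by unfold_locales (use Dsub eD Ld_add Ld_scale idI orth J1iff finJ1 Kexp perp in auto)
  have Yeq: "Yspace \<mu> u lam0 s = ca.Y s" for s
  proof -
    have "{u j lam0 | j. \<forall>n<s. nderiv n (\<mu> j) lam0 = 0} = {e j 0 | j. \<forall>n<s. mm j n = 0}"
      by (simp add: e0 mm_def M_def)
    then show ?thesis by (simp add: Yspace_def ca.Y_def)
  qed
  have rc: "root_chain D L (complex_of_real lam0) m us \<longleftrightarrow> ca.gchain m us \<and> us 0 \<noteq> 0" for us
  proof -
    have trm: "(\<Sum>l=0..q. (1 / fact l) *\<^sub>C (cderiv ^^ l) (\<lambda>z. L z (us (q - l))) (complex_of_real lam0)) =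
                (\<Sum>l\<le>q. Ld l (us (q - l)))" for q
      by (simp add: Ld_def LD_def atLeast0AtMost)
    have q0: "(\<Sum>l\<le>0. Ld l (us (0 - l))) = L (complex_of_real lam0) (us 0)" by (simp add: Ld0)
    have "(\<forall>q<m. (\<Sum>l\<le>q. Ld l (us (q - l))) = 0) \<longleftrightarrow>
          L (complex_of_real lam0) (us 0) = 0 \<and> (\<forall>q. 1 \<le> q \<and> q \<le> m - 1 \<longrightarrow> (\<Sum>l\<le>q. Ld l (us (q - l))) = 0)"
    proof safe
      assume "\<forall>q<m. (\<Sum>l\<le>q. Ld l (us (q - l))) = 0"
      moreover have "0 < m" using m_pos by simp
      ultimately have "(\<Sum>l\<le>0. Ld l (us (0 - l))) = 0" by blast
      then show "L (complex_of_real lam0) (us 0) = 0" using q0 by simp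
    next
      fix q assume "\<forall>q<m. (\<Sum>l\<le>q. Ld l (us (q - l))) = 0" "1 \<le> q" "q \<le> m - 1"
      moreover have "q < m" using \<open>q \<le> m - 1\<close> m_pos by arith
      ultimately show "(\<Sum>l\<le>q. Ld l (us (q - l))) = 0" by blast
    next
      fix q assume h: "L (complex_of_real lam0) (us 0) = 0" "\<forall>q. 1 \<le> q \<and> q \<le> m - 1 \<longrightarrow> (\<Sum>l\<le>q. Ld l (us (q - l))) = 0" "q < m"
      show "(\<Sum>l\<le>q. Ld l (us (q - l))) = 0"
      proof (cases "q = 0")
        case True then show ?thesis using h(1) q0 by simp
      next
        case False then show ?thesis using h(2,3) by simp
      qed
    qed
    then show ?thesis
      unfolding root_chain_def ca.gchain_def trm by blast
  qed
  have Econv: "(1 / fact d) *\<^sub>C Uop d u lam0 (Vop u lam0 x) = ca.E d x" if x: "x \<in> ca.K" for d x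
  proof -
    have z: "cinner x (u j lam0) = 0" if j: "j \<notin> J1" for j
    proof -
      have eqx: "x = (\<Sum>i\<in>J1. cinner x (e i 0) *\<^sub>C e i 0)" by (rule ca.K_exp[OF x])
      have "cinner x (e j 0) = cinner (\<Sum>i\<in>J1. cinner x (e i 0) *\<^sub>C e i 0) (e j 0)"
        using eqx by (rule arg_cong[where f = "\<lambda>y. cinner y (e j 0)"])
      also have "\<dots> = (\<Sum>i\<in>J1. cinner x (e i 0) * cinner (e i 0) (e j 0))"
        by (simp add: cinner_sum_left cinner_scaleC_left)
      finally have "cinner x (e j 0) = (\<Sum>i\<in>J1. cinner x (e i 0) * cinner (e i 0) (e j 0))" .
      also have "\<dots> = 0" using j by (intro sum.neutral) (auto simp: orth)
      finally show ?thesis by (simp add: e0)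
    qed
    have "Uop d u lam0 (Vop u lam0 x) = (\<Sum>j\<in>J1. cinner x (u j lam0) *\<^sub>C U d j)"
      unfolding Uop_def Vop_def U_def by (rule suminf_finite[OF finJ1]) (simp add: z)
    then show ?thesis
      by (simp add: ca.E_def e0 e_def U_def scaleC_sum_right scaleC_scaleC mult.commute)
  qed
  show ?thesis
  proof (intro conjI allI impI)
    fix u0 :: 'a assume u0: "u0 \<noteq> 0"
    show "(\<exists>us. root_chain D L (complex_of_real lam0) m us \<and> us 0 = u0) \<longleftrightarrow> u0 \<in> Yspace \<mu> u lam0 m"
    proof
      assume "\<exists>us. root_chain D L (complex_of_real lam0) m us \<and> us 0 = u0"
      then obtain us where r: "root_chain D L (complex_of_real lam0) m us" and us0: "us 0 = u0" by blast
      then have "ca.gchain m us" using rc by blast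
      then obtain w where wY: "\<forall>s<m. w s \<in> ca.Y (m - s)" and wr: "\<forall>r<m. us r = ca.rep w r"
        using ca.gchain_repr by blast
      have w0: "w 0 \<in> ca.Y m" using wY m_pos by auto
      then have "w 0 \<in> ca.K" using ca.Y_K[of m] m_pos by auto
      then have "ca.rep w 0 = w 0" by (simp add: ca.rep_def ca.E0_K)
      then have "u0 = w 0" using wr m_pos us0 by auto
      then show "u0 \<in> Yspace \<mu> u lam0 m" using w0 Yeq by simp
    next
      assume "u0 \<in> Yspace \<mu> u lam0 m"
      then have uY: "u0 \<in> ca.Y m" using Yeq by simp
      then have uK: "u0 \<in> ca.K" using ca.Y_K[of m] m_pos by auto
      define w where "w s = (if s = 0 then u0 else 0)" for s :: nat
      have "ca.gchain m (ca.rep w)"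
        by (rule ca.gchain_rep) (auto simp: w_def uY ca.Y_zero)
      moreover have r0: "ca.rep w 0 = u0" by (simp add: ca.rep_def w_def ca.E0_K[OF uK])
      ultimately have "root_chain D L (complex_of_real lam0) m (ca.rep w)" using rc u0 by simp
      then show "\<exists>us. root_chain D L (complex_of_real lam0) m us \<and> us 0 = u0" using r0 by blast
    qed
  next
    fix us assume "root_chain D L (complex_of_real lam0) m us"
    then have "ca.gchain m us" using rc by blast
    then obtain w where wY: "\<forall>s<m. w s \<in> ca.Y (m - s)" and wr: "\<forall>r<m. us r = ca.rep w r"
      using ca.gchain_repr by blast
    have wK: "w s \<in> ca.K" if "s < m" for s
    proof -
      have "1 \<le> m - s" using that by simp
      then show ?thesis using ca.Y_K[of "m - s"] wY that by auto
    qed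
    show "\<exists>w. (\<forall>s<m. w s \<in> Yspace \<mu> u lam0 (m - s)) \<and>
             (\<forall>r<m. us r = (\<Sum>d = 0..r. (1 / fact d) *\<^sub>C Uop d u lam0 (Vop u lam0 (w (r - d)))))"
    proof (intro exI[of _ w] conjI allI impI)
      fix s assume "s < m" then show "w s \<in> Yspace \<mu> u lam0 (m - s)" using wY Yeq by simp
    next
      fix r assume r: "r < m"
      have "(\<Sum>d = 0..r. (1 / fact d) *\<^sub>C Uop d u lam0 (Vop u lam0 (w (r - d)))) = ca.rep w r"
        unfolding ca.rep_def atLeast0AtMost
        by (rule sum.cong[OF refl], rule Econv, rule wK) (use r in auto)
      then show "us r = (\<Sum>d = 0..r. (1 / fact d) *\<^sub>C Uop d u lam0 (Vop u lam0 (w (r - d))))"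
        using wr r by simp
    qed
  qed
qed

end
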